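(* Let $\mathcal M\subset \mathcal M_n(\mathbb R)$ be a compact convex set of irreducible Metzler matrices and let $\tau>0$. Define the cone \[ K_\tau=\overline{\mathrm{co}}\Big(\bigcup_{M\in L^\infty(0,\tau)}R(\tau,M)K\Big). \] Then: (i) $K_\tau$ is positively invariant under every flow, i.e. $R(s,M)K_\tau\subset K_\tau$ for all $s\ge0$ and all $M\in L^\infty(0,s)$; (ii) $K_\tau$ is closed, $K_\tau\setminus\{0\}$ is contained in the interior $K_+$ of $K$, and $K_\tau\setminus\{0\}$ is bounded with respect to Hilbert's projective metric.
   Context: A matrix is Metzler if its off-diagonal entries are nonnegative; it is irreducible if for every partition $\{1,\dots,n\}=I\sqcup J$ into nonempty sets some $m_{ij}$ with $i\in I$, $j\in J$ is positive. $K$ is the nonnegative orthant of $\mathbb R^n$ and $K_+$ the positive orthant. For $s>0$, $L^\infty(0,s)$ is the set of measurable controls $M:[0,s]\to\mathcal M$, and $R(s,M)$ is the resolvent: $R(s,M)x=x_M(s)$ where $\dot x_M=M(\cdot)x_M$, $x_M(0)=x$. $\overline{\mathrm{co}}$ denotes closed convex hull. Hilbert's projective metric on $K_+$ is $d(x,y)=\log\max_{i,j}\frac{x_iy_j}{x_jy_i}$. *)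

theory Defs
  imports "HOL-Analysis.Analysis"
begin

definition nonneg_orthant :: "(real^'n) set" where
  "nonneg_orthant = {x. \<forall>i. 0 \<le> x $ i}"

definition pos_orthant :: "(real^'n) set" where
  "pos_orthant = {x. \<forall>i. 0 < x $ i}"

definition metzler :: "real^'n^'n \<Rightarrow> bool" where
  "metzler A \<longleftrightarrow> (\<forall>i j. i \<noteq> j \<longrightarrow> 0 \<le> A $ i $ j)"

definition irreducible_mat :: "real^'n^'n \<Rightarrow> bool" where
  "irreducible_mat A \<longleftrightarrow>
     (\<forall>I J. I \<noteq> {} \<and> J \<noteq> {} \<and> I \<inter> J = {} \<and> I \<union> J = UNIV \<longrightarrow>
        (\<exists>i\<in>I. \<exists>j\<in>J. 0 < A $ i $ j))"

text \<open>Admissible controls L^infinity(0,s): measurable maps [0,s] -> \<M>.\<close>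
definition controls :: "(real^'n^'n) set \<Rightarrow> real \<Rightarrow> (real \<Rightarrow> real^'n^'n) set" where
  "controls \<M> s = {M. M \<in> borel_measurable (lebesgue_on {0..s}) \<and> (\<forall>t\<in>{0..s}. M t \<in> \<M>)}"

definition is_sol :: "(real \<Rightarrow> real^'n^'n) \<Rightarrow> real \<Rightarrow> real^'n \<Rightarrow> (real \<Rightarrow> real^'n) \<Rightarrow> bool" where
  "is_sol M s x0 x \<longleftrightarrow> continuous_on {0..s} x \<and>
     (\<forall>t\<in>{0..s}. (\<lambda>r. M r *v x r) integrable_on {0..t} \<and>
                  x t = x0 + integral {0..t} (\<lambda>r. M r *v x r))"

definition resolvent :: "real \<Rightarrow> (real \<Rightarrow> real^'n^'n) \<Rightarrow> real^'n \<Rightarrow> real^'n" where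
  "resolvent s M x0 = (THE y. \<exists>x. is_sol M s x0 x \<and> x s = y)"

definition K_tau :: "(real^'n^'n) set \<Rightarrow> real \<Rightarrow> (real^'n) set" where
  "K_tau \<M> \<tau> = closure (convex hull (\<Union>M\<in>controls \<M> \<tau>. resolvent \<tau> M ` nonneg_orthant))"

definition hilbert_dist :: "real^'n \<Rightarrow> real^'n \<Rightarrow> real" where
  "hilbert_dist x y = ln (Max {(x $ i * y $ j) / (x $ j * y $ i) | i j. True})"

end

theory Submission
  imports Defs
begin

lemma mv_bound:
  fixes A :: "real^'n^'n"
  assumes "\<And>i j. \<bar>A $ i $ j\<bar> \<le> B"
  shows "norm (A *v v) \<le> (real CARD('n) * real CARD('n) * B) * norm v"
proof -
  have "norm (A *v v) \<le> onorm ((*v) A) * norm v"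
    by (rule onorm[OF matrix_vector_mul_bounded_linear])
  also have "\<dots> \<le> (real CARD('n) * real CARD('n) * B) * norm v"
    by (rule mult_right_mono[OF onorm_le_matrix_component[OF assms]]) simp
  finally show ?thesis .
qed

lemma cont_mv: "continuous_on UNIV (\<lambda>p::((real^'n^'n) \<times> (real^'n)). fst p *v snd p)"
  unfolding matrix_vector_mult_def
  by (intro continuous_on_vec_lambda continuous_intros)

definition ctrl_ok :: "(real \<Rightarrow> real^'n^'n) \<Rightarrow> real \<Rightarrow> real \<Rightarrow> bool" where
  "ctrl_ok F s B \<longleftrightarrow> F \<in> borel_measurable (lebesgue_on {0..s}) \<and> (\<forall>r\<in>{0..s}. \<forall>i j. \<bar>F r $ i $ j\<bar> \<le> B)"

lemma ctrl_ok_norm: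
  fixes F :: "real \<Rightarrow> real^'n^'n"
  assumes "ctrl_ok F s B" "r \<in> {0..s}"
  shows "norm (F r *v v) \<le> (real CARD('n) * real CARD('n) * B) * norm v"
  by (rule mv_bound) (use assms in \<open>auto simp: ctrl_ok_def\<close>)

lemma int_mv:
  fixes F :: "real \<Rightarrow> real^'n^'n"
  assumes c: "ctrl_ok F s B" and y: "continuous_on {0..s} y"
  shows "(\<lambda>r. F r *v y r) integrable_on {0..s}"
proof -
  obtain Y where Y: "\<And>r. r \<in> {0..s} \<Longrightarrow> norm (y r) \<le> Y"
    using continuous_on_compact_bound[OF compact_Icc y] by metis
  have m1: "F \<in> borel_measurable (lebesgue_on {0..s})" using c by (simp add: ctrl_ok_def)
  have m2: "y \<in> borel_measurable (lebesgue_on {0..s})"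
    by (rule continuous_imp_measurable_on_sets_lebesgue[OF y]) simp
  have m: "(\<lambda>r. F r *v y r) \<in> borel_measurable (lebesgue_on {0..s})"
    using borel_measurable_continuous_Pair[OF m1 m2, of "\<lambda>A v. A *v v"] cont_mv by blast
  show ?thesis
  proof (rule measurable_bounded_by_integrable_imp_integrable[OF m])
    show "(\<lambda>r. (real CARD('n) * real CARD('n) * B) * Y) integrable_on {0..s}" by blast
    fix r assume r: "r \<in> {0..s}"
    have "\<bar>F r $ undefined $ undefined\<bar> \<le> B" using c r by (auto simp: ctrl_ok_def)
    then have B: "0 \<le> real CARD('n) * real CARD('n) * B" by simp
    show "norm (F r *v y r) \<le> (real CARD('n) * real CARD('n) * B) * Y"
      using ctrl_ok_norm[OF c r, of "y r"] mult_left_mono[OF Y[OF r] B] by linarith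
  qed simp
qed

lemma int_mv_sub:
  fixes F :: "real \<Rightarrow> real^'n^'n"
  assumes c: "ctrl_ok F s B" and y: "continuous_on {0..s} y" and "0 \<le> a" "a \<le> b" "b \<le> s"
  shows "(\<lambda>r. F r *v y r) integrable_on {a..b}"
  using int_mv[OF c y] integrable_subinterval_real assms by fastforce

lemma int_comp:
  fixes F :: "real \<Rightarrow> real^'n^'n"
  assumes c: "ctrl_ok F s B" and y: "continuous_on {0..s} y" and "0 \<le> a" "a \<le> b" "b \<le> s"
  shows "(\<lambda>r. F r $ i $ j * y r $ j) integrable_on {a..b}"
proof -
  have yc: "continuous_on {0..s} (\<lambda>r. axis j (y r $ j))"
    unfolding axis_def
  proof (intro continuous_on_vec_lambda)
    fix i show "continuous_on {0..s} (\<lambda>x. if i = j then y x $ j else 0)"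
      by (cases "i = j") (auto intro!: continuous_intros y)
  qed
  have "(\<lambda>r. (F r *v axis j (y r $ j)) $ i) integrable_on {a..b}"
    using integrable_linear[OF int_mv_sub[OF c yc assms(3-5)] bounded_linear_vec_nth[of i]]
    by (simp add: o_def)
  moreover have "(F r *v axis j (y r $ j)) $ i = F r $ i $ j * y r $ j" for r
    by (simp add: matrix_vector_mult_def axis_def if_distrib cong: if_cong)
  ultimately show ?thesis by simp
qed

lemma int_pow:
  assumes "0 \<le> t"
  shows "((\<lambda>r::real. r^k) has_integral t^(Suc k) / real (Suc k)) {0..t}"
proof -
  have "((\<lambda>r::real. r^Suc k / real (Suc k)) has_vector_derivative r^k) (at r within {0..t})" for r
  proof -
    have "((\<lambda>r::real. r^Suc k / real (Suc k)) has_real_derivative real (Suc k) * r ^ (Suc k - Suc 0) / real (Suc k)) (at r)"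
      by (intro DERIV_cdivide DERIV_pow)
    then have "((\<lambda>r::real. r^Suc k / real (Suc k)) has_real_derivative r^k) (at r)"
      by (simp del: of_nat_Suc)
    then show ?thesis
      unfolding has_real_derivative_iff_has_vector_derivative[symmetric]
      by (rule has_field_derivative_at_within)
  qed
  from fundamental_theorem_of_calculus[OF assms this] show ?thesis by simp
qed

lemma integrable_cmult_real: "f integrable_on S \<Longrightarrow> (\<lambda>x. (c::real) * f x) integrable_on S"
  using integrable_on_cmult_left[of f S c] by simp

lemma fact_to_zero: "(\<lambda>k. c * (x::real)^k / fact k) \<longlonglongrightarrow> 0"
proof -
  have "(\<lambda>k. x^k /\<^sub>R fact k) \<longlonglongrightarrow> 0"
    using summable_LIMSEQ_zero[OF sums_summable[OF exp_converges]] .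
  then have "(\<lambda>k. c * (x^k /\<^sub>R fact k)) \<longlonglongrightarrow> c * 0" by (intro tendsto_mult tendsto_const)
  then show ?thesis by (simp add: divide_inverse ac_simps)
qed

lemma gronwall0:
  fixes u :: "real \<Rightarrow> real"
  assumes cu: "continuous_on {0..s} u" and nn: "\<And>t. t \<in> {0..s} \<Longrightarrow> 0 \<le> u t" and L: "0 \<le> L"
    and le: "\<And>t. t \<in> {0..s} \<Longrightarrow> u t \<le> L * integral {0..t} u"
    and t: "t \<in> {0..s}"
  shows "u t = 0"
proof -
  obtain m where m0: "m \<ge> 0" and m: "\<And>t. t \<in> {0..s} \<Longrightarrow> norm (u t) \<le> m"
    using continuous_on_compact_bound[OF compact_Icc cu] by metis
  have ind: "\<forall>t\<in>{0..s}. u t \<le> m * (L*t)^k / fact k" for k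
  proof (induction k)
    case 0 then show ?case using m by (force simp: abs_le_iff)
  next
    case (Suc k)
    show ?case
    proof
      fix t assume t: "t \<in> {0..s}"
      have ui: "u integrable_on {0..t}"
        using integrable_continuous_real[OF continuous_on_subset[OF cu]] t by auto
      have t0: "0 \<le> t" using t by auto
      have pi: "((\<lambda>r. (m * L^k / fact k) * r^k) has_integral (m * L^k / fact k) * (t^(Suc k) / real (Suc k))) {0..t}"
        by (rule has_integral_mult_right[OF int_pow[OF t0]])
      have "integral {0..t} u \<le> integral {0..t} (\<lambda>r. (m * L^k / fact k) * r^k)"
        using Suc.IH t by (intro integral_le[OF ui has_integral_integrable[OF pi]]) (auto simp: power_mult_distrib mult.assoc)
      also have "\<dots> = (m * L^k / fact k) * (t^(Suc k) / real (Suc k))"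
        using pi by (rule integral_unique)
      finally have "L * integral {0..t} u \<le> L * ((m * L^k / fact k) * (t^(Suc k) / real (Suc k)))"
        using L by (rule mult_left_mono)
      also have "\<dots> = m * (L*t)^Suc k / fact (Suc k)"
        by (simp add: power_mult_distrib field_simps del: of_nat_Suc)
      finally show "u t \<le> m * (L*t)^Suc k / fact (Suc k)" using le[OF t] by linarith
    qed
  qed
  have "u t \<le> 0"
    using ind t by (intro LIMSEQ_le_const[OF fact_to_zero[of m "L*t"]]) auto
  then show ?thesis using nn[OF t] by linarith
qed

lemma sol_cont: "is_sol F s x0 x \<Longrightarrow> continuous_on {0..s} x"
  by (simp add: is_sol_def)

lemma sol_diff:
  fixes F :: "real \<Rightarrow> real^'n^'n"
  assumes c: "ctrl_ok F s B" and x: "is_sol F s x0 x" and ab: "0 \<le> a" "a \<le> b" "b \<le> s"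
  shows "x b - x a = integral {a..b} (\<lambda>r. F r *v x r)"
proof -
  have "x b = x0 + integral {0..b} (\<lambda>r. F r *v x r)" "x a = x0 + integral {0..a} (\<lambda>r. F r *v x r)"
    using x ab by (auto simp: is_sol_def)
  moreover have "integral {0..a} (\<lambda>r. F r *v x r) + integral {a..b} (\<lambda>r. F r *v x r) = integral {0..b} (\<lambda>r. F r *v x r)"
    using ab by (intro Henstock_Kurzweil_Integration.integral_combine int_mv_sub[OF c sol_cont[OF x]]) auto
  ultimately show ?thesis by (simp add: algebra_simps)
qed

lemma sol_diff_comp:
  fixes F :: "real \<Rightarrow> real^'n^'n"
  assumes c: "ctrl_ok F s B" and x: "is_sol F s x0 x" and ab: "0 \<le> a" "a \<le> b" "b \<le> s"
  shows "x b $ i - x a $ i = (\<Sum>j\<in>UNIV. integral {a..b} (\<lambda>r. F r $ i $ j * x r $ j))"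
proof -
  have "x b $ i - x a $ i = integral {a..b} (\<lambda>r. F r *v x r) $ i"
    using sol_diff[OF assms] by (metis vector_minus_component)
  also have "\<dots> = integral {a..b} (\<lambda>r. (F r *v x r) $ i)"
    by (rule integral_component_eq_cart[symmetric]) (rule int_mv_sub[OF c sol_cont[OF x] ab])
  also have "\<dots> = integral {a..b} (\<lambda>r. \<Sum>j\<in>UNIV. F r $ i $ j * x r $ j)"
    by (simp add: matrix_vector_mult_def)
  also have "\<dots> = (\<Sum>j\<in>UNIV. integral {a..b} (\<lambda>r. F r $ i $ j * x r $ j))"
    by (rule integral_sum) (auto intro: int_comp[OF c sol_cont[OF x] ab])
  finally show ?thesis .
qed

lemma sol_unique:
  fixes F :: "real \<Rightarrow> real^'n^'n"
  assumes c: "ctrl_ok F s B" and x: "is_sol F s x0 x" and x': "is_sol F s x0 x'" and t: "t \<in> {0..s}"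
  shows "x t = x' t"
proof -
  define L where "L = real CARD('n) * real CARD('n) * B"
  have "\<bar>F t $ undefined $ undefined\<bar> \<le> B" using c t by (auto simp: ctrl_ok_def)
  then have L: "0 \<le> L" unfolding L_def by simp
  let ?u = "\<lambda>t. norm (x t - x' t)"
  have cu: "continuous_on {0..s} ?u"
    using sol_cont[OF x] sol_cont[OF x'] by (intro continuous_intros)
  have "?u t = 0" if t: "t \<in> {0..s}" for t
  proof (rule gronwall0[OF cu _ L _ t])
    fix t assume t: "t \<in> {0..s}"
    have i1: "(\<lambda>r. F r *v x r) integrable_on {0..t}" and i2: "(\<lambda>r. F r *v x' r) integrable_on {0..t}"
      using t by (auto intro!: int_mv_sub[OF c] sol_cont[OF x] sol_cont[OF x'])
    have "x t - x' t = integral {0..t} (\<lambda>r. F r *v x r) - integral {0..t} (\<lambda>r. F r *v x' r)"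
      using x x' t by (auto simp: is_sol_def)
    also have "\<dots> = integral {0..t} (\<lambda>r. F r *v (x r - x' r))"
      using integral_diff[OF i1 i2] by (simp add: matrix_vector_mult_diff_distrib)
    finally have eq: "x t - x' t = integral {0..t} (\<lambda>r. F r *v (x r - x' r))" .
    have ui: "?u integrable_on {0..t}"
      using integrable_continuous_real[OF continuous_on_subset[OF cu]] t by auto
    have "norm (integral {0..t} (\<lambda>r. F r *v (x r - x' r))) \<le> integral {0..t} (\<lambda>r. L * ?u r)"
    proof (rule integral_norm_bound_integral)
      show "(\<lambda>r. F r *v (x r - x' r)) integrable_on {0..t}"
        using integrable_diff[OF i1 i2] by (simp add: matrix_vector_mult_diff_distrib)
      show "(\<lambda>r. L * ?u r) integrable_on {0..t}" using ui by (rule integrable_cmult_real)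
      fix r assume "r \<in> {0..t}"
      then show "norm (F r *v (x r - x' r)) \<le> L * ?u r"
        unfolding L_def using t by (intro ctrl_ok_norm[OF c]) auto
    qed
    then show "?u t \<le> L * integral {0..t} ?u" using eq by simp
  qed simp
  then show ?thesis using t by simp
qed

primrec picard :: "(real \<Rightarrow> real^'n^'n) \<Rightarrow> real^'n \<Rightarrow> nat \<Rightarrow> real \<Rightarrow> real^'n" where
  "picard F x0 0 = (\<lambda>t. x0)"
| "picard F x0 (Suc k) = (\<lambda>t. x0 + integral {0..t} (\<lambda>r. F r *v picard F x0 k r))"

lemma pic_cont:
  fixes F :: "real \<Rightarrow> real^'n^'n"
  assumes c: "ctrl_ok F s B"
  shows "continuous_on {0..s} (picard F x0 k)"
proof (induction k)
  case 0 then show ?case by (simp add: continuous_on_const)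
next
  case (Suc k)
  show ?case
    using indefinite_integral_continuous_1[OF int_mv[OF c Suc]]
    by (simp add: continuous_on_add continuous_on_const)
qed

lemma pic_bound:
  fixes F :: "real \<Rightarrow> real^'n^'n"
  assumes c: "ctrl_ok F s B" and L: "L = real CARD('n) * real CARD('n) * B" and L0: "0 \<le> L"
  shows "\<forall>t\<in>{0..s}. norm (picard F x0 (Suc k) t - picard F x0 k t) \<le> norm x0 * (L*t)^(Suc k) / fact (Suc k)"
proof (induction k)
  case 0
  show ?case
  proof
    fix t assume t: "t \<in> {0..s}"
    have i1: "(\<lambda>r. F r *v x0) integrable_on {0..t}"
      using t by (intro int_mv_sub[OF c]) (auto simp: continuous_on_const)
    have "norm (integral {0..t} (\<lambda>r. F r *v x0)) \<le> integral {0..t} (\<lambda>r. L * norm x0)"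
      using t by (intro integral_norm_bound_integral[OF i1]) (auto simp: L intro!: ctrl_ok_norm[OF c])
    then show "norm (picard F x0 (Suc 0) t - picard F x0 0 t) \<le> norm x0 * (L*t)^(Suc 0) / fact (Suc 0)"
      using t by (simp add: algebra_simps)
  qed
next
  case (Suc k)
  show ?case
  proof
    fix t assume t: "t \<in> {0..s}"
    have t0: "0 \<le> t" using t by auto
    have i1: "(\<lambda>r. F r *v picard F x0 (Suc k) r) integrable_on {0..t}"
     and i2: "(\<lambda>r. F r *v picard F x0 k r) integrable_on {0..t}"
      using t by (auto intro!: int_mv_sub[OF c] pic_cont[OF c] simp del: picard.simps)
    have "picard F x0 (Suc (Suc k)) t - picard F x0 (Suc k) t
        = integral {0..t} (\<lambda>r. F r *v picard F x0 (Suc k) r) - integral {0..t} (\<lambda>r. F r *v picard F x0 k r)"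
      by simp
    also have "\<dots> = integral {0..t} (\<lambda>r. F r *v (picard F x0 (Suc k) r - picard F x0 k r))"
      using integral_diff[OF i1 i2] by (simp add: matrix_vector_mult_diff_distrib)
    finally have eq: "picard F x0 (Suc (Suc k)) t - picard F x0 (Suc k) t =
       integral {0..t} (\<lambda>r. F r *v (picard F x0 (Suc k) r - picard F x0 k r))" .
    define C where "C = L * (norm x0 * L^(Suc k) / fact (Suc k))"
    have pi: "((\<lambda>r. C * r^(Suc k)) has_integral C * (t^(Suc (Suc k)) / real (Suc (Suc k)))) {0..t}"
      by (rule has_integral_mult_right[OF int_pow[OF t0]])
    have "norm (integral {0..t} (\<lambda>r. F r *v (picard F x0 (Suc k) r - picard F x0 k r)))
          \<le> integral {0..t} (\<lambda>r. C * r^(Suc k))"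
    proof (rule integral_norm_bound_integral)
      show "(\<lambda>r. F r *v (picard F x0 (Suc k) r - picard F x0 k r)) integrable_on {0..t}"
        using integrable_diff[OF i1 i2] by (simp add: matrix_vector_mult_diff_distrib)
      show "(\<lambda>r. C * r^(Suc k)) integrable_on {0..t}" using pi by blast
      fix r assume r: "r \<in> {0..t}"
      then have rs: "r \<in> {0..s}" using t by auto
      have "norm (F r *v (picard F x0 (Suc k) r - picard F x0 k r))
           \<le> L * norm (picard F x0 (Suc k) r - picard F x0 k r)"
        unfolding L by (rule ctrl_ok_norm[OF c rs])
      also have "\<dots> \<le> L * (norm x0 * (L*r)^(Suc k) / fact (Suc k))"
        using Suc.IH rs L0 by (intro mult_left_mono) auto
      also have "\<dots> = C * r^(Suc k)"
        by (simp add: C_def power_mult_distrib)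
      finally show "norm (F r *v (picard F x0 (Suc k) r - picard F x0 k r)) \<le> C * r^(Suc k)" .
    qed
    also have "\<dots> = C * (t^(Suc (Suc k)) / real (Suc (Suc k)))" using pi by (rule integral_unique)
    also have "\<dots> = norm x0 * (L*t)^(Suc (Suc k)) / fact (Suc (Suc k))"
      unfolding C_def by (simp add: power_mult_distrib field_simps del: of_nat_Suc)
    finally show "norm (picard F x0 (Suc (Suc k)) t - picard F x0 (Suc k) t) \<le> norm x0 * (L*t)^(Suc (Suc k)) / fact (Suc (Suc k))"
      using eq by simp
  qed
qed

definition Ebound :: "real \<Rightarrow> real" where
  "Ebound a = 1 + (\<Sum>k. a^(Suc k) / fact (Suc k))"

lemma summable_expS: "summable (\<lambda>k. (a::real)^(Suc k) / fact (Suc k))"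
proof -
  have "summable (\<lambda>n. a^n /\<^sub>R fact n)" using sums_summable[OF exp_converges] .
  from summable_ignore_initial_segment[OF this, of 1] show ?thesis by (simp add: divide_inverse ac_simps)
qed

lemma sol_exists:
  fixes F :: "real \<Rightarrow> real^'n^'n"
  assumes c: "ctrl_ok F s B" and s0: "0 \<le> s"
  shows "\<exists>x. is_sol F s x0 x \<and> (\<forall>t\<in>{0..s}. norm (x t) \<le> Ebound (real CARD('n) * real CARD('n) * B * s) * norm x0)"
proof -
  define L where "L = real CARD('n) * real CARD('n) * B"
  have "\<bar>F 0 $ undefined $ undefined\<bar> \<le> B" using c s0 by (auto simp: ctrl_ok_def)
  then have L0: "0 \<le> L" unfolding L_def by simp
  define p where "p = picard F x0"
  define D where "D = (\<lambda>k t. p (Suc k) t - p k t)"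
  define b where "b = (\<lambda>k. norm x0 * ((L * s)^(Suc k) / fact (Suc k)))"
  have sb: "summable b" unfolding b_def by (intro summable_mult summable_expS)
  have Db: "norm (D k t) \<le> b k" if t: "t \<in> {0..s}" for k t
  proof -
    have "norm (D k t) \<le> norm x0 * (L*t)^(Suc k) / fact (Suc k)"
      using pic_bound[OF c L_def L0] t unfolding D_def p_def by blast
    also have "\<dots> \<le> b k"
    proof -
      have "(L*t)^Suc k \<le> (L * s)^Suc k" using t L0 by (intro power_mono mult_left_mono) auto
      then have "(L*t)^Suc k / fact (Suc k) \<le> (L * s)^Suc k / fact (Suc k)"
        by (rule divide_right_mono) simp
      then have "norm x0 * ((L*t)^Suc k / fact (Suc k)) \<le> norm x0 * ((L * s)^Suc k / fact (Suc k))"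
        by (rule mult_left_mono) simp
      then show ?thesis unfolding b_def by (simp only: times_divide_eq_right)
    qed
    finally show ?thesis .
  qed
  have sD: "summable (\<lambda>k. D k t)" if "t \<in> {0..s}" for t
    by (rule summable_comparison_test[OF _ sb]) (use Db[OF that] in auto)
  define y where "y = (\<lambda>t. x0 + (\<Sum>k. D k t))"
  have p0: "p 0 t = x0" for t by (simp add: p_def)
  have pk: "p k t = x0 + (\<Sum>m<k. D m t)" for k t
    by (induction k) (simp_all add: D_def p0)
  define tl where "tl = (\<lambda>k. \<Sum>m. b (m + k))"
  have tl0: "tl \<longlonglongrightarrow> 0"
  proof -
    have "tl = (\<lambda>k. suminf b - (\<Sum>m<k. b m))"
      unfolding tl_def using suminf_minus_initial_segment[OF sb] by simp
    moreover have "(\<lambda>k. suminf b - (\<Sum>m<k. b m)) \<longlonglongrightarrow> suminf b - suminf b"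
      by (intro tendsto_diff tendsto_const summable_LIMSEQ[OF sb])
    ultimately show ?thesis by simp
  qed
  have ptl: "norm (y t - p k t) \<le> tl k" if t: "t \<in> {0..s}" for k t
  proof -
    have "y t - p k t = (\<Sum>m. D (m + k) t)"
      unfolding y_def pk using suminf_split_initial_segment[OF sD[OF t], of k] by simp
    also have "norm \<dots> \<le> tl k"
      unfolding tl_def using Db[OF t] summable_ignore_initial_segment[OF sb]
      by (intro norm_suminf_le) auto
    finally show ?thesis .
  qed
  have ul: "uniform_limit {0..s} p y sequentially"
    unfolding uniform_limit_iff
  proof (intro allI impI)
    fix e :: real assume e: "0 < e"
    have "\<forall>\<^sub>F k in sequentially. tl k < e"
      using tl0 e by (simp add: order_tendsto_iff)
    then show "\<forall>\<^sub>F k in sequentially. \<forall>t\<in>{0..s}. dist (p k t) (y t) < e"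
    proof (rule eventually_mono)
      fix k assume "tl k < e"
      then show "\<forall>t\<in>{0..s}. dist (p k t) (y t) < e"
        using ptl by (metis atLeastAtMost_iff dist_norm norm_minus_commute le_less_trans)
    qed
  qed
  have yc: "continuous_on {0..s} y"
    by (rule uniform_limit_theorem[OF _ ul]) (auto simp: p_def intro!: always_eventually pic_cont[OF c])
  have eq: "y t = x0 + integral {0..t} (\<lambda>r. F r *v y r)" if t: "t \<in> {0..s}" for t
  proof -
    have t0: "0 \<le> t" "t \<le> s" using t by auto
    have l1: "(\<lambda>k. p (Suc k) t) \<longlonglongrightarrow> y t"
    proof -
      have tS: "(\<lambda>k. tl (Suc k)) \<longlonglongrightarrow> 0" using LIMSEQ_Suc[OF tl0] .
      have "(\<lambda>k. p (Suc k) t - y t) \<longlonglongrightarrow> 0"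
      proof (rule Lim_null_comparison[OF _ tS])
        show "\<forall>\<^sub>F k in sequentially. norm (p (Suc k) t - y t) \<le> tl (Suc k)"
          by (intro always_eventually allI) (metis ptl[OF t] norm_minus_commute)
      qed
      then have "(\<lambda>k. (p (Suc k) t - y t) + y t) \<longlonglongrightarrow> 0 + y t" by (intro tendsto_add tendsto_const)
      then show ?thesis by simp
    qed
    have iy: "(\<lambda>r. F r *v y r) integrable_on {0..t}" using t0 by (intro int_mv_sub[OF c yc]) auto
    have ip: "(\<lambda>r. F r *v p k r) integrable_on {0..t}" for k
      using t0 by (intro int_mv_sub[OF c]) (auto simp: p_def intro: pic_cont[OF c] simp del: picard.simps)
    have l2: "(\<lambda>k. p (Suc k) t) \<longlonglongrightarrow> x0 + integral {0..t} (\<lambda>r. F r *v y r)"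
    proof -
      have "(\<lambda>k. integral {0..t} (\<lambda>r. F r *v p k r) - integral {0..t} (\<lambda>r. F r *v y r)) \<longlonglongrightarrow> 0"
      proof (rule Lim_null_comparison)
        have "(\<lambda>k. L * t * tl k) \<longlonglongrightarrow> L * t * 0" by (intro tendsto_mult tendsto_const tl0)
        then show "(\<lambda>k. L * t * tl k) \<longlonglongrightarrow> 0" by simp
        show "\<forall>\<^sub>F k in sequentially. norm (integral {0..t} (\<lambda>r. F r *v p k r) - integral {0..t} (\<lambda>r. F r *v y r)) \<le> L * t * tl k"
        proof (intro always_eventually allI)
          fix k
          have "norm (integral {0..t} (\<lambda>r. F r *v p k r) - integral {0..t} (\<lambda>r. F r *v y r))
              = norm (integral {0..t} (\<lambda>r. F r *v (p k r - y r)))"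
            using integral_diff[OF ip iy] by (simp add: matrix_vector_mult_diff_distrib)
          also have "\<dots> \<le> integral {0..t} (\<lambda>r. L * tl k)"
          proof (rule integral_norm_bound_integral)
            show "(\<lambda>r. F r *v (p k r - y r)) integrable_on {0..t}"
              using integrable_diff[OF ip iy] by (simp add: matrix_vector_mult_diff_distrib)
            fix r assume r: "r \<in> {0..t}"
            then have rs: "r \<in> {0..s}" using t0 by auto
            have "norm (F r *v (p k r - y r)) \<le> L * norm (p k r - y r)"
              unfolding L_def by (rule ctrl_ok_norm[OF c rs])
            also have "\<dots> \<le> L * tl k" using ptl[OF rs] L0 by (intro mult_left_mono) (auto simp: norm_minus_commute)
            finally show "norm (F r *v (p k r - y r)) \<le> L * tl k" .
          qed auto
          also have "\<dots> = L * t * tl k" using t0 by simp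
          finally show "norm (integral {0..t} (\<lambda>r. F r *v p k r) - integral {0..t} (\<lambda>r. F r *v y r)) \<le> L * t * tl k" .
        qed
      qed
      then have "(\<lambda>k. (integral {0..t} (\<lambda>r. F r *v p k r) - integral {0..t} (\<lambda>r. F r *v y r)) + (x0 + integral {0..t} (\<lambda>r. F r *v y r))) \<longlonglongrightarrow> 0 + (x0 + integral {0..t} (\<lambda>r. F r *v y r))"
        by (intro tendsto_add tendsto_const)
      then have "(\<lambda>k. x0 + integral {0..t} (\<lambda>r. F r *v p k r)) \<longlonglongrightarrow> x0 + integral {0..t} (\<lambda>r. F r *v y r)"
        by (simp add: algebra_simps)
      then show ?thesis by (simp add: p_def)
    qed
    show ?thesis using LIMSEQ_unique[OF l1 l2] .
  qed
  have sol: "is_sol F s x0 y"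
    unfolding is_sol_def using yc eq
    by (auto intro!: int_mv_sub[OF c yc])
  have bd: "norm (y t) \<le> Ebound (L * s) * norm x0" if t: "t \<in> {0..s}" for t
  proof -
    have "norm (\<Sum>k. D k t) \<le> suminf b" using Db[OF t] sb by (intro norm_suminf_le) auto
    moreover have "suminf b = norm x0 * (\<Sum>k. (L * s)^(Suc k) / fact (Suc k))"
      unfolding b_def by (rule suminf_mult[OF summable_expS])
    ultimately show ?thesis
      unfolding y_def Ebound_def using norm_triangle_ineq[of x0 "\<Sum>k. D k t"] by (simp add: algebra_simps)
  qed
  show ?thesis using sol bd unfolding L_def by blast
qed

lemma sol_resolvent:
  fixes F :: "real \<Rightarrow> real^'n^'n"
  assumes c: "ctrl_ok F s B" and s0: "0 \<le> s" and x: "is_sol F s x0 x"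
  shows "resolvent s F x0 = x s"
  unfolding resolvent_def
proof (rule the_equality)
  show "\<exists>x'. is_sol F s x0 x' \<and> x' s = x s" using x by blast
  fix y assume "\<exists>x'. is_sol F s x0 x' \<and> x' s = y"
  then obtain x' where x': "is_sol F s x0 x'" "x' s = y" by blast
  show "y = x s" using sol_unique[OF c x'(1) x, of s] x'(2) s0 by simp
qed

lemma resolvent_sol:
  fixes F :: "real \<Rightarrow> real^'n^'n"
  assumes c: "ctrl_ok F s B" and s0: "0 \<le> s"
  obtains x where "is_sol F s x0 x" "resolvent s F x0 = x s"
    "\<And>t. t \<in> {0..s} \<Longrightarrow> norm (x t) \<le> Ebound (real CARD('n) * real CARD('n) * B * s) * norm x0"
  using sol_exists[OF c s0, of x0] sol_resolvent[OF c s0] by blast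

lemma resolvent_bound:
  fixes F :: "real \<Rightarrow> real^'n^'n"
  assumes c: "ctrl_ok F s B" and s0: "0 \<le> s"
  shows "norm (resolvent s F x0) \<le> Ebound (real CARD('n) * real CARD('n) * B * s) * norm x0"
proof -
  obtain x where "resolvent s F x0 = x s"
    "\<And>t. t \<in> {0..s} \<Longrightarrow> norm (x t) \<le> Ebound (real CARD('n) * real CARD('n) * B * s) * norm x0"
    using resolvent_sol[OF c s0] by metis
  then show ?thesis using s0 by simp
qed

lemma sol_lin:
  fixes F :: "real \<Rightarrow> real^'n^'n"
  assumes c: "ctrl_ok F s B" and x: "is_sol F s x0 x" and y: "is_sol F s y0 y"
  shows "is_sol F s (a *\<^sub>R x0 + b *\<^sub>R y0) (\<lambda>t. a *\<^sub>R x t + b *\<^sub>R y t)"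
  unfolding is_sol_def
proof (intro conjI ballI)
  show "continuous_on {0..s} (\<lambda>t. a *\<^sub>R x t + b *\<^sub>R y t)"
    using sol_cont[OF x] sol_cont[OF y] by (intro continuous_intros)
  fix t assume t: "t \<in> {0..s}"
  have ix: "(\<lambda>r. F r *v x r) integrable_on {0..t}" and iy: "(\<lambda>r. F r *v y r) integrable_on {0..t}"
    using t by (auto intro!: int_mv_sub[OF c] sol_cont[OF x] sol_cont[OF y])
  have eq: "(\<lambda>r. F r *v (a *\<^sub>R x r + b *\<^sub>R y r)) = (\<lambda>r. a *\<^sub>R (F r *v x r) + b *\<^sub>R (F r *v y r))"
    by (simp add: matrix_vector_right_distrib matrix_vector_mult_scaleR)
  show "(\<lambda>r. F r *v (a *\<^sub>R x r + b *\<^sub>R y r)) integrable_on {0..t}"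
    unfolding eq by (intro integrable_add integrable_cmul ix iy)
  have "integral {0..t} (\<lambda>r. F r *v (a *\<^sub>R x r + b *\<^sub>R y r)) =
        a *\<^sub>R integral {0..t} (\<lambda>r. F r *v x r) + b *\<^sub>R integral {0..t} (\<lambda>r. F r *v y r)"
    unfolding eq by (simp add: integral_add integrable_cmul ix iy)
  moreover have "x t = x0 + integral {0..t} (\<lambda>r. F r *v x r)" "y t = y0 + integral {0..t} (\<lambda>r. F r *v y r)"
    using x y t by (auto simp: is_sol_def)
  ultimately show "a *\<^sub>R x t + b *\<^sub>R y t = (a *\<^sub>R x0 + b *\<^sub>R y0) + integral {0..t} (\<lambda>r. F r *v (a *\<^sub>R x r + b *\<^sub>R y r))"
    by (simp add: algebra_simps)
qed

lemma resolvent_lin: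
  fixes F :: "real \<Rightarrow> real^'n^'n"
  assumes c: "ctrl_ok F s B" and s0: "0 \<le> s"
  shows "resolvent s F (a *\<^sub>R x0 + b *\<^sub>R y0) = a *\<^sub>R resolvent s F x0 + b *\<^sub>R resolvent s F y0"
proof -
  obtain x where x: "is_sol F s x0 x" "resolvent s F x0 = x s" using resolvent_sol[OF c s0] by metis
  obtain y where y: "is_sol F s y0 y" "resolvent s F y0 = y s" using resolvent_sol[OF c s0] by metis
  show ?thesis using sol_resolvent[OF c s0 sol_lin[OF c x(1) y(1), of a b]] x y by simp
qed

lemma resolvent_linear:
  fixes F :: "real \<Rightarrow> real^'n^'n"
  assumes c: "ctrl_ok F s B" and s0: "0 \<le> s"
  shows "linear (resolvent s F)"
proof (rule linearI)
  fix x y show "resolvent s F (x + y) = resolvent s F x + resolvent s F y"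
    using resolvent_lin[OF c s0, of 1 x 1 y] by simp
next
  fix a x show "resolvent s F (a *\<^sub>R x) = a *\<^sub>R resolvent s F x"
    using resolvent_lin[OF c s0, of a x 0 x] by simp
qed

lemma is_sol_cong:
  fixes F G :: "real \<Rightarrow> real^'n^'n"
  assumes N: "negligible N" and eq: "\<And>r. r \<in> {0..s} - N \<Longrightarrow> F r = G r"
  shows "is_sol F s x0 x \<longleftrightarrow> is_sol G s x0 x"
proof -
  have "\<And>t. t \<in> {0..s} \<Longrightarrow> ((\<lambda>r. F r *v x r) integrable_on {0..t} \<longleftrightarrow> (\<lambda>r. G r *v x r) integrable_on {0..t})
      \<and> integral {0..t} (\<lambda>r. F r *v x r) = integral {0..t} (\<lambda>r. G r *v x r)"
  proof -
    fix t assume t: "t \<in> {0..s}"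
    have e: "\<And>r. r \<in> {0..t} - N \<Longrightarrow> G r *v x r = F r *v x r" using eq t by auto
    have e': "\<And>r. r \<in> {0..t} - N \<Longrightarrow> F r *v x r = G r *v x r" using e by metis
    have i1: "(\<lambda>r. F r *v x r) integrable_on {0..t} \<Longrightarrow> (\<lambda>r. G r *v x r) integrable_on {0..t}"
      by (rule integrable_spike[OF _ N e])
    have i2: "(\<lambda>r. G r *v x r) integrable_on {0..t} \<Longrightarrow> (\<lambda>r. F r *v x r) integrable_on {0..t}"
      by (rule integrable_spike[OF _ N e'])
    have "integral {0..t} (\<lambda>r. F r *v x r) = integral {0..t} (\<lambda>r. G r *v x r)"
      by (rule integral_spike[OF N e])
    then show "?thesis t" using i1 i2 by blast
  qed
  then show ?thesis unfolding is_sol_def by auto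
qed

lemma resolvent_cong:
  fixes F G :: "real \<Rightarrow> real^'n^'n"
  assumes N: "negligible N" and eq: "\<And>r. r \<in> {0..s} - N \<Longrightarrow> F r = G r"
  shows "resolvent s F = resolvent s G"
  unfolding resolvent_def using is_sol_cong[OF assms] by (intro ext) simp

lemma decay_step:
  fixes u :: "real \<Rightarrow> real"
  assumes cu: "continuous_on {a..b} u" and nn: "\<And>\<tau>. \<tau> \<in> {a..b} \<Longrightarrow> 0 \<le> u \<tau>" and lam: "0 \<le> lam"
    and H: "\<And>r t. a \<le> r \<Longrightarrow> r \<le> t \<Longrightarrow> t \<le> b \<Longrightarrow> - lam * integral {r..t} u \<le> u t - u r"
    and rt: "a \<le> r" "r \<le> t" "t \<le> b" and small: "lam * (t - r) \<le> 1"
  shows "(1 - lam * (t - r)) * u r \<le> u t"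
proof -
  obtain q where q: "q \<in> {r..t}" and qm: "\<And>\<tau>. \<tau> \<in> {r..t} \<Longrightarrow> u \<tau> \<le> u q"
    using continuous_attains_sup[of "{r..t}" u] continuous_on_subset[OF cu] rt by force
  have uq: "0 \<le> u q" using nn q rt by auto
  have iu: "u integrable_on {q..t}"
    using integrable_continuous_real[OF continuous_on_subset[OF cu]] q rt by auto
  have "integral {q..t} u \<le> integral {q..t} (\<lambda>_. u q)"
    using qm q by (intro integral_le[OF iu]) auto
  also have "\<dots> = (t - q) * u q" using q by simp
  finally have "lam * integral {q..t} u \<le> lam * ((t - q) * u q)" using lam by (rule mult_left_mono)
  then have "u q - lam * ((t - q) * u q) \<le> u t" using H[of q t] q rt by auto
  then have 1: "(1 - lam * (t - q)) * u q \<le> u t" by (simp add: algebra_simps)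
  have "lam * (t - q) \<le> lam * (t - r)" using q lam by (intro mult_left_mono) auto
  then have "(1 - lam * (t - r)) * u q \<le> (1 - lam * (t - q)) * u q" using uq by (intro mult_right_mono) auto
  moreover have "(1 - lam * (t - r)) * u r \<le> (1 - lam * (t - r)) * u q"
    using qm[of r] rt small by (intro mult_left_mono) auto
  ultimately show ?thesis using 1 by linarith
qed

lemma decay:
  fixes u :: "real \<Rightarrow> real"
  assumes cu: "continuous_on {a..b} u" and nn: "\<And>\<tau>. \<tau> \<in> {a..b} \<Longrightarrow> 0 \<le> u \<tau>" and lam: "0 \<le> lam"
    and H: "\<And>r t. a \<le> r \<Longrightarrow> r \<le> t \<Longrightarrow> t \<le> b \<Longrightarrow> - lam * integral {r..t} u \<le> u t - u r"
    and h: "0 < h" "lam * h \<le> 1/2"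
  shows "a \<le> r \<Longrightarrow> r \<le> t \<Longrightarrow> t \<le> b \<Longrightarrow> t - r \<le> real k * h \<Longrightarrow> (1/2)^k * u r \<le> u t"
proof (induction k arbitrary: t)
  case 0 then show ?case by simp
next
  case (Suc k)
  show ?case
  proof (cases "t - r \<le> h")
    case True
    have "lam * (t - r) \<le> lam * h" using True lam by (rule mult_left_mono)
    then have le: "lam * (t - r) \<le> 1/2" using h by linarith
    have "(1 - lam * (t - r)) * u r \<le> u t"
      using decay_step[OF cu nn lam H] Suc.prems le by auto
    moreover have "(1/2)^Suc k * u r \<le> (1 - lam * (t - r)) * u r"
    proof (rule mult_right_mono)
      have "(1/2::real)^Suc k \<le> 1/2" by (simp add: power_le_one)
      then show "(1/2)^Suc k \<le> 1 - lam * (t - r)" using le by linarith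
      show "0 \<le> u r" using nn Suc.prems by auto
    qed
    ultimately show ?thesis by linarith
  next
    case False
    define r' where "r' = t - h"
    have r': "r \<le> r'" "r' \<le> t" "r' - r \<le> real k * h" using False Suc.prems h by (auto simp: r'_def algebra_simps)
    have IH: "(1/2)^k * u r \<le> u r'" using Suc.IH[of r'] Suc.prems r' by auto
    have "lam * (t - r') \<le> 1/2" using h by (simp add: r'_def)
    then have "(1 - lam * (t - r')) * u r' \<le> u t"
      using decay_step[OF cu nn lam H, of r' t] Suc.prems r' by auto
    moreover have "(1/2) * u r' \<le> (1 - lam * (t - r')) * u r'"
      using nn[of r'] Suc.prems r' \<open>lam * (t - r') \<le> 1/2\<close> by (intro mult_right_mono) auto
    moreover have "(1/2)^Suc k * u r \<le> (1/2) * u r'" using IH by simp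
    ultimately show ?thesis by linarith
  qed
qed

definition metz_on :: "(real \<Rightarrow> real^'n^'n) \<Rightarrow> real \<Rightarrow> bool" where
  "metz_on F s \<longleftrightarrow> (\<forall>r\<in>{0..s}. \<forall>i j. i \<noteq> j \<longrightarrow> 0 \<le> F r $ i $ j)"

lemma sol_lower:
  fixes F :: "real \<Rightarrow> real^'n^'n"
  assumes c: "ctrl_ok F s B" and m: "metz_on F s" and x: "is_sol F s x0 x"
    and rt: "0 \<le> r" "r \<le> t" "t \<le> s" and nn: "\<And>\<tau> j. \<tau> \<in> {r..t} \<Longrightarrow> 0 \<le> x \<tau> $ j"
  shows "- B * integral {r..t} (\<lambda>\<tau>. x \<tau> $ i) \<le> x t $ i - x r $ i"
proof -
  have cx: "continuous_on {0..s} x" by (rule sol_cont[OF x])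
  have ci: "continuous_on {0..s} (\<lambda>\<tau>. x \<tau> $ i)" by (intro continuous_intros cx)
  have ixi: "(\<lambda>\<tau>. x \<tau> $ i) integrable_on {r..t}"
    using integrable_continuous_real[OF continuous_on_subset[OF ci]] rt by auto
  have ic: "\<And>j. (\<lambda>\<tau>. F \<tau> $ i $ j * x \<tau> $ j) integrable_on {r..t}"
    by (rule int_comp[OF c cx rt])
  have eq: "x t $ i - x r $ i = integral {r..t} (\<lambda>\<tau>. F \<tau> $ i $ i * x \<tau> $ i)
      + (\<Sum>j\<in>UNIV - {i}. integral {r..t} (\<lambda>\<tau>. F \<tau> $ i $ j * x \<tau> $ j))"
    using sol_diff_comp[OF c x rt, of i] by (simp add: sum.remove[of UNIV i])
  have "integral {r..t} (\<lambda>\<tau>. - B * x \<tau> $ i) \<le> integral {r..t} (\<lambda>\<tau>. F \<tau> $ i $ i * x \<tau> $ i)"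
  proof (rule integral_le)
    show "(\<lambda>\<tau>. - B * x \<tau> $ i) integrable_on {r..t}" using ixi by (rule integrable_cmult_real)
    show "(\<lambda>\<tau>. F \<tau> $ i $ i * x \<tau> $ i) integrable_on {r..t}" by (rule ic)
    fix \<tau> assume \<tau>: "\<tau> \<in> {r..t}"
    have "\<bar>F \<tau> $ i $ i\<bar> \<le> B" using c \<tau> rt by (auto simp: ctrl_ok_def)
    then show "- B * x \<tau> $ i \<le> F \<tau> $ i $ i * x \<tau> $ i"
      using nn[OF \<tau>, of i] by (intro mult_right_mono) auto
  qed
  moreover have "0 \<le> (\<Sum>j\<in>UNIV - {i}. integral {r..t} (\<lambda>\<tau>. F \<tau> $ i $ j * x \<tau> $ j))"
  proof (rule sum_nonneg)
    fix j assume j: "j \<in> UNIV - {i}"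
    show "0 \<le> integral {r..t} (\<lambda>\<tau>. F \<tau> $ i $ j * x \<tau> $ j)"
    proof (rule integral_nonneg[OF ic])
      fix \<tau> assume \<tau>: "\<tau> \<in> {r..t}"
      have "0 \<le> F \<tau> $ i $ j" using m j \<tau> rt by (auto simp: metz_on_def)
      then show "0 \<le> F \<tau> $ i $ j * x \<tau> $ j" using nn[OF \<tau>, of j] by simp
    qed
  qed
  ultimately show ?thesis using eq by simp
qed

lemma sol_x0: "is_sol F s x0 x \<Longrightarrow> 0 \<le> s \<Longrightarrow> x 0 = x0"
  by (auto simp: is_sol_def)

lemma sol_decay_gen:
  fixes F :: "real \<Rightarrow> real^'n^'n"
  assumes c: "ctrl_ok F s B" and m: "metz_on F s" and x: "is_sol F s x0 x" and B: "0 \<le> B"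
    and T: "T \<le> s" and nn: "\<And>\<tau> j. \<tau> \<in> {0..T} \<Longrightarrow> 0 \<le> x \<tau> $ j"
    and h: "0 < h" "B * h \<le> 1/2"
    and rt: "0 \<le> r" "r \<le> t" "t \<le> T" "t - r \<le> real k * h"
  shows "(1/2)^k * x r $ i \<le> x t $ i"
proof (rule decay[where u = "\<lambda>\<tau>. x \<tau> $ i" and a = 0 and b = T and lam = B, OF _ _ B _ h rt])
  show "continuous_on {0..T} (\<lambda>\<tau>. x \<tau> $ i)"
    using T by (intro continuous_intros continuous_on_subset[OF sol_cont[OF x]]) auto
  show "\<And>\<tau>. \<tau> \<in> {0..T} \<Longrightarrow> 0 \<le> x \<tau> $ i" using nn by auto
  fix r t assume "0 \<le> r" "r \<le> t" "t \<le> T"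
  then show "- B * integral {r..t} (\<lambda>\<tau>. x \<tau> $ i) \<le> x t $ i - x r $ i"
    using T by (intro sol_lower[OF c m x] nn) auto
qed

lemma sol_pos_strict:
  fixes F :: "real \<Rightarrow> real^'n^'n"
  assumes c: "ctrl_ok F s B" and m: "metz_on F s" and x: "is_sol F s x0 x" and s0: "0 \<le> s"
    and pos: "\<And>i. 0 < x0 $ i" and t: "t \<in> {0..s}"
  shows "0 < x t $ i"
proof (rule ccontr)
  assume "\<not> 0 < x t $ i"
  have B: "0 \<le> B"
  proof -
    have "\<bar>F 0 $ i $ i\<bar> \<le> B" using c s0 by (auto simp: ctrl_ok_def)
    then show ?thesis by simp
  qed
  have cx: "continuous_on {0..s} x" by (rule sol_cont[OF x])
  define S where "S = (\<Union>j. {0..s} \<inter> (\<lambda>\<tau>. x \<tau> $ j) -` {..0})"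
  have clS: "closed S" unfolding S_def
    by (intro closed_UN finite_UNIV ballI continuous_closed_preimage continuous_intros cx) auto
  have "x t $ i \<le> 0" using \<open>\<not> 0 < x t $ i\<close> by simp
  then have tS: "t \<in> S" using t unfolding S_def by blast
  have bS: "bdd_below S" unfolding S_def by (rule bdd_belowI[of _ 0]) auto
  define T where "T = Inf S"
  have TS: "T \<in> S" unfolding T_def using closed_contains_Inf[OF _ bS clS] tS by auto
  have Tl: "\<And>\<tau>. \<tau> \<in> S \<Longrightarrow> T \<le> \<tau>" unfolding T_def using bS by (simp add: cInf_lower)
  have T0: "0 \<le> T" "T \<le> s" using TS unfolding S_def by auto
  obtain i0 where i0: "x T $ i0 \<le> 0" using TS unfolding S_def by auto
  have x0: "x 0 = x0" by (rule sol_x0[OF x s0])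
  have below: "\<And>\<tau> j. \<tau> \<in> {0..T} \<Longrightarrow> \<tau> < T \<Longrightarrow> 0 < x \<tau> $ j"
  proof (rule ccontr)
    fix \<tau> j assume "\<tau> \<in> {0..T}" "\<tau> < T" "\<not> 0 < x \<tau> $ j"
    then have "x \<tau> $ j \<le> 0" "\<tau> \<in> {0..s}" using T0 by auto
    then have "\<tau> \<in> S" unfolding S_def by blast
    then show False using Tl \<open>\<tau> < T\<close> by force
  qed
  have nn: "\<And>\<tau> j. \<tau> \<in> {0..T} \<Longrightarrow> 0 \<le> x \<tau> $ j"
  proof -
    fix \<tau> j assume \<tau>: "\<tau> \<in> {0..T}"
    show "0 \<le> x \<tau> $ j"
    proof (cases "\<tau> < T")
      case True then show ?thesis using below[OF \<tau>] by (simp add: less_imp_le)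
    next
      case False
      then have "\<tau> = T" using \<tau> by auto
      show ?thesis
      proof (rule ccontr)
        assume neg: "\<not> 0 \<le> x \<tau> $ j"
        have "\<exists>z. 0 \<le> z \<and> z \<le> T \<and> x z $ j = 0"
        proof (rule IVT2'[of "\<lambda>z. x z $ j"])
          show "x T $ j \<le> 0" using neg \<open>\<tau> = T\<close> by simp
          show "0 \<le> x 0 $ j" using pos[of j] x0 by (simp add: less_imp_le)
          show "0 \<le> T" using T0 by simp
          show "continuous_on {0..T} (\<lambda>z. x z $ j)"
            using T0 by (intro continuous_intros continuous_on_subset[OF cx]) auto
        qed
        then obtain z where z: "z \<in> {0..T}" "x z $ j = 0" by auto
        have "z \<noteq> T" using z neg \<open>\<tau> = T\<close> by auto
        then have "z < T" using z by auto
        then show False using below[OF z(1), of j] z by simp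
      qed
    qed
  qed
  define h where "h = 1 / (2 * (B + 1))"
  have h: "0 < h" "B * h \<le> 1/2" using B by (auto simp: h_def field_simps)
  obtain k where k: "T < real k * h" using ex_less_of_nat_mult[OF h(1)] by blast
  have "(1/2)^k * x 0 $ i0 \<le> x T $ i0"
    using sol_decay_gen[OF c m x B T0(2) nn h, of 0 T k i0] T0 k by auto
  moreover have "0 < (1/2::real)^k * x 0 $ i0" using pos[of i0] x0 by simp
  ultimately show False using i0 by linarith
qed

lemma sol_nonneg:
  fixes F :: "real \<Rightarrow> real^'n^'n"
  assumes c: "ctrl_ok F s B" and m: "metz_on F s" and x: "is_sol F s x0 x" and s0: "0 \<le> s"
    and nn0: "\<And>i. 0 \<le> x0 $ i" and t: "t \<in> {0..s}"
  shows "0 \<le> x t $ i"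
proof (rule ccontr)
  assume "\<not> 0 \<le> x t $ i"
  then have a: "x t $ i < 0" by simp
  obtain z where z: "is_sol F s (vec 1) z" using sol_exists[OF c s0] by blast
  define w where "w = z t $ i"
  define e where "e = - x t $ i / (2 * (\<bar>w\<bar> + 1))"
  have "0 < 2 * (\<bar>w\<bar> + 1)" by simp
  then have e0: "0 < e" using a unfolding e_def by (intro divide_pos_pos) auto
  have sl: "is_sol F s (1 *\<^sub>R x0 + e *\<^sub>R vec 1) (\<lambda>t. 1 *\<^sub>R x t + e *\<^sub>R z t)"
    by (rule sol_lin[OF c x z])
  have "0 < (\<lambda>t. 1 *\<^sub>R x t + e *\<^sub>R z t) t $ i"
    by (rule sol_pos_strict[OF c m sl s0 _ t]) (use nn0 e0 in \<open>simp add: add_nonneg_pos\<close>)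
  then have pos: "0 < x t $ i + e * w" by (simp add: w_def)
  have "e * w \<le> e * \<bar>w\<bar>" using e0 by (intro mult_left_mono) auto
  also have "e * \<bar>w\<bar> = - x t $ i * (\<bar>w\<bar> / (2 * (\<bar>w\<bar> + 1)))" by (simp add: e_def)
  also have "\<dots> \<le> - x t $ i * (1/2)"
    using a by (intro mult_left_mono) (auto simp: field_simps)
  finally show False using pos a by linarith
qed

lemma sol_decay:
  fixes F :: "real \<Rightarrow> real^'n^'n"
  assumes c: "ctrl_ok F s B" and m: "metz_on F s" and x: "is_sol F s x0 x" and s0: "0 \<le> s"
    and nn0: "\<And>i. 0 \<le> x0 $ i" and B: "0 \<le> B"
    and h: "0 < h" "B * h \<le> 1/2"
    and rt: "0 \<le> r" "r \<le> t" "t \<le> s" "t - r \<le> real k * h"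
  shows "(1/2)^k * x r $ i \<le> x t $ i"
  by (rule sol_decay_gen[OF c m x B order_refl _ h rt]) (rule sol_nonneg[OF c m x s0 nn0], auto)

lemma sol_lower2:
  fixes F :: "real \<Rightarrow> real^'n^'n"
  assumes c: "ctrl_ok F s B" and m: "metz_on F s" and x: "is_sol F s x0 x"
    and rt: "0 \<le> r" "r \<le> t" "t \<le> s" and nn: "\<And>\<tau> j. \<tau> \<in> {r..t} \<Longrightarrow> 0 \<le> x \<tau> $ j"
    and J: "i \<notin> J"
  shows "- B * integral {r..t} (\<lambda>\<tau>. x \<tau> $ i) + (\<Sum>j\<in>J. integral {r..t} (\<lambda>\<tau>. F \<tau> $ i $ j * x \<tau> $ j))
          \<le> x t $ i - x r $ i"
proof -
  have cx: "continuous_on {0..s} x" by (rule sol_cont[OF x])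
  have ci: "continuous_on {0..s} (\<lambda>\<tau>. x \<tau> $ i)" by (intro continuous_intros cx)
  have ixi: "(\<lambda>\<tau>. x \<tau> $ i) integrable_on {r..t}"
    using integrable_continuous_real[OF continuous_on_subset[OF ci]] rt by auto
  have ic: "\<And>j. (\<lambda>\<tau>. F \<tau> $ i $ j * x \<tau> $ j) integrable_on {r..t}"
    by (rule int_comp[OF c cx rt])
  have J': "J \<subseteq> UNIV - {i}" using J by auto
  have eq: "x t $ i - x r $ i = integral {r..t} (\<lambda>\<tau>. F \<tau> $ i $ i * x \<tau> $ i)
      + ((\<Sum>j\<in>(UNIV - {i}) - J. integral {r..t} (\<lambda>\<tau>. F \<tau> $ i $ j * x \<tau> $ j))
         + (\<Sum>j\<in>J. integral {r..t} (\<lambda>\<tau>. F \<tau> $ i $ j * x \<tau> $ j)))"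
    using sol_diff_comp[OF c x rt, of i] sum.subset_diff[OF J', of "\<lambda>j. integral {r..t} (\<lambda>\<tau>. F \<tau> $ i $ j * x \<tau> $ j)"]
    by (simp add: sum.remove[of UNIV i])
  have "integral {r..t} (\<lambda>\<tau>. - B * x \<tau> $ i) \<le> integral {r..t} (\<lambda>\<tau>. F \<tau> $ i $ i * x \<tau> $ i)"
  proof (rule integral_le)
    show "(\<lambda>\<tau>. - B * x \<tau> $ i) integrable_on {r..t}" using ixi by (rule integrable_cmult_real)
    show "(\<lambda>\<tau>. F \<tau> $ i $ i * x \<tau> $ i) integrable_on {r..t}" by (rule ic)
    fix \<tau> assume \<tau>: "\<tau> \<in> {r..t}"
    have "\<bar>F \<tau> $ i $ i\<bar> \<le> B" using c \<tau> rt by (auto simp: ctrl_ok_def)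
    then show "- B * x \<tau> $ i \<le> F \<tau> $ i $ i * x \<tau> $ i"
      using nn[OF \<tau>, of i] by (intro mult_right_mono) auto
  qed
  moreover have "0 \<le> (\<Sum>j\<in>(UNIV - {i}) - J. integral {r..t} (\<lambda>\<tau>. F \<tau> $ i $ j * x \<tau> $ j))"
  proof (rule sum_nonneg)
    fix j assume j: "j \<in> (UNIV - {i}) - J"
    show "0 \<le> integral {r..t} (\<lambda>\<tau>. F \<tau> $ i $ j * x \<tau> $ j)"
    proof (rule integral_nonneg[OF ic])
      fix \<tau> assume \<tau>: "\<tau> \<in> {r..t}"
      have "0 \<le> F \<tau> $ i $ j" using m j \<tau> rt by (auto simp: metz_on_def)
      then show "0 \<le> F \<tau> $ i $ j * x \<tau> $ j" using nn[OF \<tau>, of j] by simp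
    qed
  qed
  ultimately show ?thesis using eq by simp
qed

lemma pick_large:
  fixes g :: "'a \<Rightarrow> real"
  assumes fin: "finite P" and ne: "P \<noteq> {}" and card: "real (card P) \<le> N" and D: "0 \<le> D" and N: "0 < N"
    and sum: "D \<le> sum g P"
  shows "\<exists>p\<in>P. D / N \<le> g p"
proof (rule ccontr)
  assume "\<not> (\<exists>p\<in>P. D / N \<le> g p)"
  then have "\<forall>p\<in>P. g p < D / N" by auto
  then have "sum g P < sum (\<lambda>_. D / N) P" by (intro sum_strict_mono fin ne) auto
  also have "\<dots> = real (card P) * (D / N)" by simp
  also have "\<dots> \<le> N * (D / N)" using card D N by (intro mult_right_mono) auto
  also have "\<dots> = D" using N by simp
  finally show False using sum by simp
qed

lemma irr_step:
  fixes F :: "real \<Rightarrow> real^'n^'n"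
  assumes c: "ctrl_ok F s B" and m: "metz_on F s" and x: "is_sol F s x0 x" and s0: "0 \<le> s"
    and nn0: "\<And>i. 0 \<le> x0 $ i" and B0: "0 \<le> B"
    and dl: "0 < \<delta>" and irr: "\<And>r S. r \<in> {0..s} \<Longrightarrow> S \<noteq> {} \<Longrightarrow> S \<noteq> UNIV \<Longrightarrow> \<delta> \<le> (\<Sum>i\<in>-S. \<Sum>j\<in>S. F r $ i $ j)"
    and h: "0 < h" "B * h \<le> 1/2"
    and ab: "0 \<le> a" "a < b" "b \<le> s" "b - a \<le> real k * h"
    and S: "S \<noteq> {}" "S \<noteq> UNIV" and c0: "0 \<le> cc"
    and cS: "\<And>j r. j \<in> S \<Longrightarrow> r \<in> {a..b} \<Longrightarrow> cc \<le> x r $ j"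
  shows "\<exists>i. i \<notin> S \<and> min (\<delta> * (b - a) / (2 * real (CARD('n) * CARD('n)))) ((1/2)^k * \<delta> / (2 * (B + 1) * real (CARD('n) * CARD('n)))) * cc \<le> x b $ i"
proof -
  define N where "N = real (CARD('n) * CARD('n))"
  have N0: "0 < N" by (simp add: N_def)
  have cx: "continuous_on {0..s} x" by (rule sol_cont[OF x])
  have nn: "\<And>\<tau> j. \<tau> \<in> {0..s} \<Longrightarrow> 0 \<le> x \<tau> $ j" by (rule sol_nonneg[OF c m x s0 nn0])
  have abs: "0 \<le> a" "a \<le> b" "b \<le> s" using ab by auto
  define g where "g = (\<lambda>i j. integral {a..b} (\<lambda>\<tau>. F \<tau> $ i $ j * x \<tau> $ j))"
  have ic: "\<And>i j. (\<lambda>\<tau>. F \<tau> $ i $ j * x \<tau> $ j) integrable_on {a..b}"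
    by (rule int_comp[OF c cx abs])
  define D where "D = \<delta> * cc * (b - a)"
  have D0: "0 \<le> D" using dl c0 ab by (simp add: D_def)
  have sumge: "D \<le> (\<Sum>i\<in>-S. \<Sum>j\<in>S. g i j)"
  proof -
    have ii: "(\<lambda>\<tau>. \<Sum>j\<in>S. F \<tau> $ i $ j * x \<tau> $ j) integrable_on {a..b}" for i
      by (intro integrable_sum ic) auto
    have "(\<Sum>i\<in>-S. \<Sum>j\<in>S. g i j) = (\<Sum>i\<in>-S. integral {a..b} (\<lambda>\<tau>. \<Sum>j\<in>S. F \<tau> $ i $ j * x \<tau> $ j))"
      unfolding g_def by (intro sum.cong refl integral_sum[symmetric] ic) auto
    also have "\<dots> = integral {a..b} (\<lambda>\<tau>. \<Sum>i\<in>-S. \<Sum>j\<in>S. F \<tau> $ i $ j * x \<tau> $ j)"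
      by (intro integral_sum[symmetric] ii) auto
    finally have eq: "(\<Sum>i\<in>-S. \<Sum>j\<in>S. g i j) = integral {a..b} (\<lambda>\<tau>. \<Sum>i\<in>-S. \<Sum>j\<in>S. F \<tau> $ i $ j * x \<tau> $ j)" .
    have "integral {a..b} (\<lambda>\<tau>. \<delta> * cc) \<le> integral {a..b} (\<lambda>\<tau>. \<Sum>i\<in>-S. \<Sum>j\<in>S. F \<tau> $ i $ j * x \<tau> $ j)"
    proof (rule integral_le)
      show "(\<lambda>\<tau>. \<Sum>i\<in>-S. \<Sum>j\<in>S. F \<tau> $ i $ j * x \<tau> $ j) integrable_on {a..b}"
        by (intro integrable_sum ii) auto
      fix \<tau> assume \<tau>: "\<tau> \<in> {a..b}"
      then have \<tau>s: "\<tau> \<in> {0..s}" using ab by auto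
      have "\<delta> * cc \<le> (\<Sum>i\<in>-S. \<Sum>j\<in>S. F \<tau> $ i $ j) * cc"
        using irr[OF \<tau>s S] c0 by (rule mult_right_mono)
      also have "\<dots> = (\<Sum>i\<in>-S. \<Sum>j\<in>S. F \<tau> $ i $ j * cc)" by (simp add: sum_distrib_right)
      also have "\<dots> \<le> (\<Sum>i\<in>-S. \<Sum>j\<in>S. F \<tau> $ i $ j * x \<tau> $ j)"
      proof (intro sum_mono mult_left_mono)
        fix i j assume "i \<in> -S" "j \<in> S"
        then have "i \<noteq> j" by auto
        then show "cc \<le> x \<tau> $ j" "0 \<le> F \<tau> $ i $ j"
          using cS \<tau> m \<tau>s \<open>j \<in> S\<close> by (auto simp: metz_on_def)
      qed
      finally show "\<delta> * cc \<le> (\<Sum>i\<in>-S. \<Sum>j\<in>S. F \<tau> $ i $ j * x \<tau> $ j)" .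
    qed blast
    then show ?thesis using eq abs by (simp add: D_def mult_ac)
  qed
  define P where "P = (-S) \<times> S"
  have Pfin: "finite P" and Pne: "P \<noteq> {}" using S by (auto simp: P_def)
  have Pcard: "real (card P) \<le> N"
  proof -
    have "card P \<le> card ((UNIV :: 'n set) \<times> (UNIV :: 'n set))" by (intro card_mono) (auto simp: P_def)
    then have "card P \<le> CARD('n) * CARD('n)" by (simp add: card_cartesian_product)
    then show ?thesis unfolding N_def by (metis of_nat_le_iff)
  qed
  have eqc: "(\<Sum>i\<in>-S. \<Sum>j\<in>S. g i j) = (\<Sum>p\<in>P. g (fst p) (snd p))"
    unfolding P_def sum.cartesian_product by (simp add: case_prod_beta)
  have sP: "D \<le> (\<Sum>p\<in>P. g (fst p) (snd p))" using sumge unfolding eqc .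
  from pick_large[OF Pfin Pne Pcard D0 N0 sP] obtain p where p: "p \<in> P" "D / N \<le> g (fst p) (snd p)"
    by blast
  define i where "i = fst p"
  define j0 where "j0 = snd p"
  have i: "i \<notin> S" and j0: "j0 \<in> S" using p by (auto simp: P_def i_def j0_def)
  define G where "G = g i j0"
  have G: "D / N \<le> G" using p by (simp add: G_def i_def j0_def)
  have low: "- B * integral {a..b} (\<lambda>\<tau>. x \<tau> $ i) + G \<le> x b $ i - x a $ i"
  proof -
    have nn': "\<And>\<tau> j. \<tau> \<in> {a..b} \<Longrightarrow> 0 \<le> x \<tau> $ j" using nn abs by auto
    have ij: "i \<notin> {j0}" using i j0 by auto
    show ?thesis using sol_lower2[OF c m x abs nn' ij] unfolding G_def g_def by simp
  qed
  have cxi: "continuous_on {a..b} (\<lambda>\<tau>. x \<tau> $ i)"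
    using abs by (intro continuous_intros continuous_on_subset[OF cx]) auto
  obtain q where q: "q \<in> {a..b}" and qm: "\<And>\<tau>. \<tau> \<in> {a..b} \<Longrightarrow> x \<tau> $ i \<le> x q $ i"
    using continuous_attains_sup[of "{a..b}" "\<lambda>\<tau>. x \<tau> $ i"] cxi abs by force
  define M where "M = x q $ i"
  have M0: "0 \<le> M" using nn q abs by (auto simp: M_def)
  have "integral {a..b} (\<lambda>\<tau>. x \<tau> $ i) \<le> integral {a..b} (\<lambda>_. M)"
    using qm by (intro integral_le integrable_continuous_real cxi) (auto simp: M_def)
  also have "\<dots> = (b - a) * M" using abs by simp
  finally have iM: "B * integral {a..b} (\<lambda>\<tau>. x \<tau> $ i) \<le> B * ((b - a) * M)" using B0 by (rule mult_left_mono)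
  have xa: "0 \<le> x a $ i" using nn abs by auto
  define \<kappa> where "\<kappa> = min (\<delta> * (b - a) / (2 * N)) ((1/2)^k * \<delta> / (2 * (B + 1) * N))"
  have DN: "D / N = \<delta> * (b - a) / N * cc" by (simp add: D_def)
  have "\<kappa> * cc \<le> x b $ i"
  proof (cases "B * ((b - a) * M) \<le> G / 2")
    case True
    then have "G / 2 \<le> x b $ i" using low iM xa by linarith
    moreover have "\<kappa> * cc \<le> \<delta> * (b - a) / (2 * N) * cc" unfolding \<kappa>_def using c0 by (intro mult_right_mono) auto
    moreover have "\<delta> * (b - a) / (2 * N) * cc = D / N / 2" by (simp add: D_def mult_ac)
    moreover have "D / N / 2 \<le> G / 2" using G by simp
    ultimately show ?thesis by linarith
  next
    case False
    moreover have "D / N / 2 \<le> G / 2" using G by simp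
    ultimately have "D / N / 2 < B * ((b - a) * M)" by linarith
    then have X: "\<delta> * cc / N / 2 * (b - a) < (B * M) * (b - a)" by (simp add: DN mult_ac)
    have "\<delta> * cc / N / 2 < B * M" by (rule mult_right_less_imp_less[OF X]) (use ab in simp)
    also have "\<dots> \<le> (B + 1) * M" using M0 by (simp add: algebra_simps)
    finally have "\<delta> * cc / N / 2 \<le> M * (B + 1)" by (metis less_imp_le mult.commute)
    then have "\<delta> * cc / N / 2 / (B + 1) \<le> M" using B0 by (subst pos_divide_le_eq) auto
    then have 1: "(1/2)^k * (\<delta> * cc / N / 2 / (B + 1)) \<le> (1/2)^k * M" by (intro mult_left_mono) auto
    have 2: "(1/2)^k * M \<le> x b $ i"
      unfolding M_def using q ab by (intro sol_decay[OF c m x s0 nn0 B0 h]) auto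
    have "\<kappa> * cc \<le> (1/2)^k * \<delta> / (2 * (B + 1) * N) * cc" unfolding \<kappa>_def using c0 by (intro mult_right_mono) auto
    also have "\<dots> = (1/2)^k * (\<delta> * cc / N / 2 / (B + 1))" by (simp add: mult_ac distrib_left)
    finally show ?thesis using 1 2 by linarith
  qed
  then show ?thesis using i unfolding \<kappa>_def N_def by blast
qed

lemma spread:
  fixes F :: "real \<Rightarrow> real^'n^'n"
  assumes c: "ctrl_ok F s B" and m: "metz_on F s" and x: "is_sol F s x0 x" and s0: "0 \<le> s"
    and nn0: "\<And>i. 0 \<le> x0 $ i" and B0: "0 \<le> B"
    and dl: "0 < \<delta>" and irr: "\<And>r S. r \<in> {0..s} \<Longrightarrow> S \<noteq> {} \<Longrightarrow> S \<noteq> UNIV \<Longrightarrow> \<delta> \<le> (\<Sum>i\<in>-S. \<Sum>j\<in>S. F r $ i $ j)"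
    and h: "0 < h" "B * h \<le> 1/2"
    and T: "0 < T" "T \<le> s" and hk: "T / real CARD('n) \<le> real k * h"
    and \<rho>: "\<rho> = (1/2)^k * min 1 (min (\<delta> * (T / real CARD('n)) / (2 * real (CARD('n) * CARD('n)))) ((1/2)^k * \<delta> / (2 * (B + 1) * real (CARD('n) * CARD('n)))))"
  shows "\<rho>^CARD('n) * x0 $ j0 \<le> x T $ i"
proof -
  define n where "n = CARD('n)"
  define d where "d = T / real n"
  define \<kappa> where "\<kappa> = min (\<delta> * d / (2 * real (CARD('n) * CARD('n)))) ((1/2)^k * \<delta> / (2 * (B + 1) * real (CARD('n) * CARD('n))))"
  have n0: "0 < n" by (simp add: n_def)
  have d0: "0 < d" using T n0 by (simp add: d_def)
  have \<kappa>0: "0 < \<kappa>" using dl d0 B0 by (simp add: \<kappa>_def)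
  have \<rho>': "\<rho> = (1/2)^k * min 1 \<kappa>" using \<rho> by (simp add: \<kappa>_def d_def n_def)
  have \<rho>0: "0 < \<rho>" using \<kappa>0 by (simp add: \<rho>')
  have \<rho>1: "\<rho> \<le> (1/2)^k" by (simp add: \<rho>')
  have \<rho>2: "\<rho> \<le> (1/2)^k * \<kappa>" by (simp add: \<rho>')
  have X0: "0 \<le> x0 $ j0" by (rule nn0)
  have tm: "real m * d \<le> T" if "m \<le> n" for m
  proof -
    have "real m * d \<le> real n * d" using that d0 by (intro mult_right_mono) auto
    also have "\<dots> = T" using n0 by (simp add: d_def)
    finally show ?thesis .
  qed
  have claim: "m \<le> n \<Longrightarrow> \<exists>S. min (Suc m) n \<le> card S \<and> (\<forall>j\<in>S. \<rho>^m * x0 $ j0 \<le> x (real m * d) $ j)" for m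
  proof (induction m)
    case 0
    have "x 0 = x0" by (rule sol_x0[OF x s0])
    then show ?case by (intro exI[of _ "{j0}"]) auto
  next
    case (Suc m)
    then obtain S where S: "min (Suc m) n \<le> card S" "\<forall>j\<in>S. \<rho>^m * x0 $ j0 \<le> x (real m * d) $ j" by auto
    define a where "a = real m * d"
    define b where "b = real (Suc m) * d"
    have bad: "b - a = d" by (simp add: a_def b_def algebra_simps)
    have dk: "d \<le> real k * h" using hk by (simp add: d_def n_def)
    have "0 \<le> a" using d0 by (simp add: a_def)
    moreover have "b \<le> s" using tm[OF Suc.prems] T by (simp add: b_def)
    ultimately have ab: "0 \<le> a" "a < b" "b \<le> s" "b - a \<le> real k * h"
      using bad d0 dk by auto
    define cc where "cc = (1/2)^k * (\<rho>^m * x0 $ j0)"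
    have cc0: "0 \<le> cc" using \<rho>0 X0 by (simp add: cc_def)
    have cS: "cc \<le> x r $ j" if "j \<in> S" "r \<in> {a..b}" for j r
    proof -
      have "(1/2)^k * x a $ j \<le> x r $ j"
        using that ab by (intro sol_decay[OF c m x s0 nn0 B0 h]) auto
      moreover have "(1/2)^k * (\<rho>^m * x0 $ j0) \<le> (1/2)^k * x a $ j"
        using S(2) that by (intro mult_left_mono) (auto simp: a_def)
      ultimately show ?thesis unfolding cc_def by linarith
    qed
    have old: "\<rho>^Suc m * x0 $ j0 \<le> x b $ j" if "j \<in> S" for j
    proof -
      have "\<rho>^Suc m * x0 $ j0 = \<rho> * (\<rho>^m * x0 $ j0)" by simp
      also have "\<dots> \<le> (1/2)^k * (\<rho>^m * x0 $ j0)" using \<rho>1 \<rho>0 X0 by (intro mult_right_mono) auto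
      also have "\<dots> \<le> x b $ j" using cS[OF that, of b] ab by (auto simp: cc_def)
      finally show ?thesis .
    qed
    show ?case
    proof (cases "S = UNIV")
      case True
      then show ?thesis using old S(1) by (intro exI[of _ S]) (auto simp: b_def n_def)
    next
      case False
      have Sne: "S \<noteq> {}" using S(1) n0 by auto
      obtain i where i: "i \<notin> S" "\<kappa> * cc \<le> x b $ i"
        using irr_step[OF c m x s0 nn0 B0 dl irr h ab Sne False cc0 cS] ab
        by (auto simp: \<kappa>_def a_def b_def algebra_simps)
      have new: "\<rho>^Suc m * x0 $ j0 \<le> x b $ i"
      proof -
        have "\<rho>^Suc m * x0 $ j0 = \<rho> * (\<rho>^m * x0 $ j0)" by simp
        also have "\<dots> \<le> ((1/2)^k * \<kappa>) * (\<rho>^m * x0 $ j0)" using \<rho>2 \<rho>0 X0 by (intro mult_right_mono) auto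
        also have "\<dots> = \<kappa> * cc" by (simp add: cc_def)
        finally show ?thesis using i by linarith
      qed
      have "card (insert i S) = Suc (card S)" using i by (simp add: card_insert_if)
      then have "min (Suc (Suc m)) n \<le> card (insert i S)" using S(1) by simp
      then show ?thesis using old new by (intro exI[of _ "insert i S"]) (auto simp: b_def)
    qed
  qed
  obtain S where S: "min (Suc n) n \<le> card S" "\<forall>j\<in>S. \<rho>^n * x0 $ j0 \<le> x (real n * d) $ j"
    using claim[of n] by auto
  have "S = UNIV"
  proof (rule card_seteq)
    show "card (UNIV :: 'n set) \<le> card S" using S(1) by (simp add: n_def)
  qed auto
  moreover have "real n * d = T" using n0 by (simp add: d_def)
  ultimately show ?thesis using S(2) by (simp add: n_def)
qed

lemma bnd_compact:
  fixes \<M> :: "(real^'n^'n) set"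
  assumes "compact \<M>"
  obtains B where "0 \<le> B" "\<And>A i j. A \<in> \<M> \<Longrightarrow> \<bar>A $ i $ j\<bar> \<le> B"
proof -
  obtain a where a: "\<And>A. A \<in> \<M> \<Longrightarrow> norm A \<le> a"
    using compact_imp_bounded[OF assms] unfolding bounded_iff by blast
  have "\<bar>A $ i $ j\<bar> \<le> max a 0" if "A \<in> \<M>" for A i j
  proof -
    have "\<bar>A $ i $ j\<bar> \<le> norm (A $ i)" by (rule component_le_norm_cart[unfolded real_norm_def])
    also have "\<dots> \<le> norm A" by (rule Finite_Cartesian_Product.norm_nth_le)
    also have "\<dots> \<le> a" by (rule a[OF that])
    finally show ?thesis by simp
  qed
  then show ?thesis using that[of "max a 0"] by auto
qed

lemma controls_ok:
  fixes \<M> :: "(real^'n^'n) set"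
  assumes "M \<in> controls \<M> s" "\<And>A i j. A \<in> \<M> \<Longrightarrow> \<bar>A $ i $ j\<bar> \<le> B"
  shows "ctrl_ok M s B"
  using assms by (auto simp: controls_def ctrl_ok_def)

lemma controls_metz:
  fixes \<M> :: "(real^'n^'n) set"
  assumes "M \<in> controls \<M> s" "\<forall>A\<in>\<M>. metzler A"
  shows "metz_on M s"
  using assms by (auto simp: controls_def metz_on_def metzler_def)

lemma finite_min_choice:
  fixes P :: "'a \<Rightarrow> real \<Rightarrow> bool"
  assumes "finite Q" "\<forall>S\<in>Q. \<exists>d>0. P S d" "\<And>S d d'. P S d \<Longrightarrow> 0 < d' \<Longrightarrow> d' \<le> d \<Longrightarrow> P S d'"
  shows "\<exists>d>0. \<forall>S\<in>Q. P S d"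
  using assms(1,2)
proof (induction Q rule: finite_induct)
  case empty then show ?case by (intro exI[of _ 1]) auto
next
  case (insert S Q)
  then obtain d1 where d1: "d1 > 0" "\<forall>S\<in>Q. P S d1" by auto
  obtain d2 where d2: "d2 > 0" "P S d2" using insert.prems by auto
  show ?case
    using d1 d2 assms(3) by (intro exI[of _ "min d1 d2"]) (auto simp: min_def)
qed

lemma irr_delta:
  fixes \<M> :: "(real^'n^'n) set"
  assumes cp: "compact \<M>" and mi: "\<forall>A\<in>\<M>. metzler A \<and> irreducible_mat A"
  shows "\<exists>\<delta>>0. \<forall>S\<in>{S. S \<noteq> {} \<and> S \<noteq> UNIV}. \<forall>A\<in>\<M>. \<delta> \<le> (\<Sum>i\<in>-S. \<Sum>j\<in>S. A $ i $ j)"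
proof (rule finite_min_choice)
  show "finite {S :: 'n set. S \<noteq> {} \<and> S \<noteq> UNIV}" by simp
  show "\<And>S d d'. \<forall>A\<in>\<M>. d \<le> (\<Sum>i\<in>-S. \<Sum>j\<in>S. A $ i $ j) \<Longrightarrow> 0 < d' \<Longrightarrow> d' \<le> d \<Longrightarrow> \<forall>A\<in>\<M>. d' \<le> (\<Sum>i\<in>-S. \<Sum>j\<in>S. A $ i $ j)"
    by force
  show "\<forall>S\<in>{S. S \<noteq> {} \<and> S \<noteq> UNIV}. \<exists>d>0. \<forall>A\<in>\<M>. d \<le> (\<Sum>i\<in>-S. \<Sum>j\<in>S. A $ i $ j)"
  proof
    fix S :: "'n set" assume "S \<in> {S. S \<noteq> {} \<and> S \<noteq> UNIV}"
    then have S: "S \<noteq> {}" "S \<noteq> UNIV" by auto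
    have pos: "0 < (\<Sum>i\<in>-S. \<Sum>j\<in>S. A $ i $ j)" if A: "A \<in> \<M>" for A
    proof -
      have "metzler A" "irreducible_mat A" using mi A by auto
      have irr: "\<forall>I J. I \<noteq> {} \<and> J \<noteq> {} \<and> I \<inter> J = {} \<and> I \<union> J = UNIV \<longrightarrow> (\<exists>i\<in>I. \<exists>j\<in>J. 0 < A $ i $ j)"
        using \<open>irreducible_mat A\<close> by (simp add: irreducible_mat_def)
      have "-S \<noteq> {}" using S by auto
      then have "\<exists>i\<in>-S. \<exists>j\<in>S. 0 < A $ i $ j" using spec[OF spec[OF irr, of "-S"], of S] S by auto
      then obtain i j where ij: "i \<in> -S" "j \<in> S" "0 < A $ i $ j" by blast
      have nn: "\<And>i j. i \<in> -S \<Longrightarrow> j \<in> S \<Longrightarrow> 0 \<le> A $ i $ j"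
      proof -
        fix i j assume "i \<in> -S" "j \<in> S"
        then have "i \<noteq> j" by auto
        then show "0 \<le> A $ i $ j" using \<open>metzler A\<close> unfolding metzler_def by blast
      qed
      have "A $ i $ j \<le> (\<Sum>j\<in>S. A $ i $ j)" using ij nn by (intro member_le_sum) auto
      also have "\<dots> \<le> (\<Sum>i\<in>-S. \<Sum>j\<in>S. A $ i $ j)" using ij nn by (intro member_le_sum sum_nonneg) auto
      finally show ?thesis using ij by linarith
    qed
    show "\<exists>d>0. \<forall>A\<in>\<M>. d \<le> (\<Sum>i\<in>-S. \<Sum>j\<in>S. A $ i $ j)"
    proof (cases "\<M> = {}")
      case True then show ?thesis by (intro exI[of _ 1]) auto
    next
      case False
      have "continuous_on \<M> (\<lambda>A::real^'n^'n. \<Sum>i\<in>-S. \<Sum>j\<in>S. A $ i $ j)"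
        by (intro continuous_intros)
      then obtain A0 where A0: "A0 \<in> \<M>" "\<forall>A\<in>\<M>. (\<Sum>i\<in>-S. \<Sum>j\<in>S. A0 $ i $ j) \<le> (\<Sum>i\<in>-S. \<Sum>j\<in>S. A $ i $ j)"
        using continuous_attains_inf[OF cp False] by blast
      then show ?thesis using pos[OF A0(1)] by blast
    qed
  qed
qed

lemma controls_restrict:
  assumes "M \<in> controls \<M> s" "0 \<le> a" "a \<le> s"
  shows "M \<in> controls \<M> a"
proof -
  have "M \<in> borel_measurable (lebesgue_on {0..s})" using assms by (simp add: controls_def)
  then have "M \<in> borel_measurable (lebesgue_on {0..a})" by (rule measurable_restrict_mono) (use assms in auto)
  then show ?thesis using assms by (simp add: controls_def)
qed

lemma controls_shift:
  fixes M :: "real \<Rightarrow> real^'n^'n"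
  assumes M: "M \<in> controls \<M> (a + b)" and a: "0 \<le> a" and b: "0 \<le> b"
  shows "(\<lambda>r. M (r + a)) \<in> controls \<M> b"
proof -
  have m: "M \<in> borel_measurable (lebesgue_on {0..a+b})" using M by (simp add: controls_def)
  define g where "g = (\<lambda>x. if x \<in> {0..a+b} then M x else 0)"
  have g: "g \<in> borel_measurable lebesgue" unfolding g_def by (rule borel_measurable_if_I[OF m]) simp
  have "(\<lambda>x. g (a + 1 *\<^sub>R x)) \<in> borel_measurable lebesgue" by (rule borel_measurable_affine[OF g]) simp
  then have "(\<lambda>x. g (a + x)) \<in> borel_measurable (lebesgue_on {0..b})"
    by (simp add: measurable_restrict_space1)
  moreover have "\<And>x. x \<in> {0..b} \<Longrightarrow> g (a + x) = M (x + a)" using a by (auto simp: g_def add.commute)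
  ultimately have "(\<lambda>x. M (x + a)) \<in> borel_measurable (lebesgue_on {0..b})"
    using measurable_lebesgue_cong[where S="{0..b}" and f="\<lambda>x. g (a + x)" and g="\<lambda>x. M (x + a)"] by blast
  moreover have "\<forall>t\<in>{0..b}. M (t + a) \<in> \<M>" using M a by (auto simp: controls_def)
  ultimately show ?thesis by (simp add: controls_def)
qed

lemma controls_concat:
  fixes M1 M2 :: "real \<Rightarrow> real^'n^'n"
  assumes M1: "M1 \<in> controls \<M> a" and M2: "M2 \<in> controls \<M> b" and a: "0 \<le> a" and b: "0 \<le> b"
  shows "(\<lambda>r. if r \<le> a then M1 r else M2 (r - a)) \<in> controls \<M> (a + b)"
proof -
  have m1: "M1 \<in> borel_measurable (lebesgue_on {0..a})" using M1 by (simp add: controls_def)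
  have m2: "M2 \<in> borel_measurable (lebesgue_on {0..b})" using M2 by (simp add: controls_def)
  define g1 where "g1 = (\<lambda>x. if x \<in> {0..a} then M1 x else 0)"
  have g1: "g1 \<in> borel_measurable lebesgue" unfolding g1_def by (rule borel_measurable_if_I[OF m1]) simp
  define h2 where "h2 = (\<lambda>x. if x \<in> {0..b} then M2 x else 0)"
  have h2: "h2 \<in> borel_measurable lebesgue" unfolding h2_def by (rule borel_measurable_if_I[OF m2]) simp
  have "(\<lambda>x. h2 (- a + 1 *\<^sub>R x)) \<in> borel_measurable lebesgue" by (rule borel_measurable_affine[OF h2]) simp
  then have "(\<lambda>x. h2 (x - a)) \<in> borel_measurable (lebesgue_on {a<..a+b})"
    by (simp add: measurable_restrict_space1)
  then have g2: "(\<lambda>x. if x \<in> {a<..a+b} then h2 (x - a) else 0) \<in> borel_measurable lebesgue"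
    by (rule borel_measurable_if_I) simp
  have "(\<lambda>x. g1 x + (if x \<in> {a<..a+b} then h2 (x - a) else 0)) \<in> borel_measurable lebesgue"
    using g1 g2 by (rule borel_measurable_add)
  moreover have "(\<lambda>x. g1 x + (if x \<in> {a<..a+b} then h2 (x - a) else 0))
      = (\<lambda>x. if x \<in> {0..a+b} then (if x \<le> a then M1 x else M2 (x - a)) else 0)"
    using a b by (auto simp: g1_def h2_def fun_eq_iff)
  ultimately have "(\<lambda>x. if x \<le> a then M1 x else M2 (x - a)) \<in> borel_measurable (lebesgue_on {0..a+b})"
    by (simp add: borel_measurable_if_D)
  moreover have "\<forall>t\<in>{0..a+b}. (if t \<le> a then M1 t else M2 (t - a)) \<in> \<M>"
    using M1 M2 by (auto simp: controls_def)
  ultimately show ?thesis by (simp add: controls_def)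
qed

lemma sol_restrict: "is_sol F s x0 x \<Longrightarrow> a \<le> s \<Longrightarrow> is_sol F a x0 x"
  unfolding is_sol_def by (auto intro: continuous_on_subset)

lemma sol_shift:
  fixes M :: "real \<Rightarrow> real^'n^'n"
  assumes c: "ctrl_ok M (a + b) B" and x: "is_sol M (a + b) x0 x" and a: "0 \<le> a" and b: "0 \<le> b"
  shows "is_sol (\<lambda>r. M (r + a)) b (x a) (\<lambda>t. x (t + a))"
  unfolding is_sol_def
proof (intro conjI ballI)
  show "continuous_on {0..b} (\<lambda>t. x (t + a))"
    by (rule continuous_on_compose2[OF sol_cont[OF x]]) (use a in \<open>auto intro!: continuous_intros\<close>)
  fix t assume t: "t \<in> {0..b}"
  define f where "f = (\<lambda>r. M r *v x r)"
  have fi: "f integrable_on {a..t + a}" unfolding f_def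
    using t a by (intro int_mv_sub[OF c sol_cont[OF x]]) auto
  have "(f has_integral integral {a..t+a} f) {0 + a..t + a}" using integrable_integral[OF fi] by simp
  then have "((f \<circ> (+) a) has_integral integral {a..t+a} f) {0..t}"
    by (simp only: has_integral_shift_Icc_real)
  moreover have "(f \<circ> (+) a) = (\<lambda>r. M (r + a) *v x (r + a))" by (auto simp: f_def add.commute)
  ultimately have hi: "((\<lambda>r. M (r + a) *v x (r + a)) has_integral integral {a..t+a} f) {0..t}" by simp
  then show "(\<lambda>r. M (r + a) *v x (r + a)) integrable_on {0..t}" by blast
  have "x (t + a) - x a = integral {a..t+a} f" unfolding f_def
    using t a by (intro sol_diff[OF c x]) auto
  then show "x (t + a) = x a + integral {0..t} (\<lambda>r. M (r + a) *v x (r + a))"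
    using integral_unique[OF hi] by (simp add: algebra_simps)
qed

lemma resolvent_split:
  fixes M :: "real \<Rightarrow> real^'n^'n"
  assumes M: "M \<in> controls \<M> (a + b)" and bnd: "\<And>A i j. A \<in> \<M> \<Longrightarrow> \<bar>A $ i $ j\<bar> \<le> B"
    and a: "0 \<le> a" and b: "0 \<le> b"
  shows "resolvent (a + b) M x0 = resolvent b (\<lambda>r. M (r + a)) (resolvent a M x0)"
proof -
  have c: "ctrl_ok M (a + b) B" by (rule controls_ok[OF M bnd])
  have ca: "ctrl_ok M a B" by (rule controls_ok[OF controls_restrict[OF M a] bnd]) (use b in simp)
  have cb: "ctrl_ok (\<lambda>r. M (r + a)) b B" by (rule controls_ok[OF controls_shift[OF M a b] bnd])
  obtain x where x: "is_sol M (a + b) x0 x" "resolvent (a + b) M x0 = x (a + b)"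
    using resolvent_sol[OF c] a b by (metis add_nonneg_nonneg)
  have "resolvent a M x0 = x a" using sol_resolvent[OF ca a sol_restrict[OF x(1)]] b by simp
  moreover have "resolvent b (\<lambda>r. M (r + a)) (x a) = x (b + a)"
    using sol_resolvent[OF cb b sol_shift[OF c x(1) a b]] by simp
  ultimately show ?thesis using x(2) by (simp add: add.commute)
qed

lemma resolvent_nonneg:
  fixes M :: "real \<Rightarrow> real^'n^'n"
  assumes M: "M \<in> controls \<M> s" and bnd: "\<And>A i j. A \<in> \<M> \<Longrightarrow> \<bar>A $ i $ j\<bar> \<le> B"
    and mz: "\<forall>A\<in>\<M>. metzler A" and s: "0 \<le> s" and x0: "x0 \<in> nonneg_orthant"
  shows "resolvent s M x0 \<in> nonneg_orthant"
proof -
  have c: "ctrl_ok M s B" by (rule controls_ok[OF M bnd])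
  have m: "metz_on M s" by (rule controls_metz[OF M mz])
  obtain x where x: "is_sol M s x0 x" "resolvent s M x0 = x s" using resolvent_sol[OF c s] by metis
  have "\<And>i. 0 \<le> x s $ i"
    by (rule sol_nonneg[OF c m x(1) s]) (use x0 s in \<open>auto simp: nonneg_orthant_def\<close>)
  then show ?thesis using x(2) by (simp add: nonneg_orthant_def)
qed

lemma inv_step:
  fixes M N :: "real \<Rightarrow> real^'n^'n"
  assumes M: "M \<in> controls \<M> s" and N: "N \<in> controls \<M> \<tau>"
    and bnd: "\<And>A i j. A \<in> \<M> \<Longrightarrow> \<bar>A $ i $ j\<bar> \<le> B" and mz: "\<forall>A\<in>\<M>. metzler A"
    and s: "0 \<le> s" and \<tau>: "0 \<le> \<tau>" and x0: "x0 \<in> nonneg_orthant"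
  shows "\<exists>N'\<in>controls \<M> \<tau>. \<exists>z\<in>nonneg_orthant. resolvent s M (resolvent \<tau> N x0) = resolvent \<tau> N' z"
proof -
  define P where "P = (\<lambda>r. if r \<le> \<tau> then N r else M (r - \<tau>))"
  have P: "P \<in> controls \<M> (\<tau> + s)" unfolding P_def by (rule controls_concat[OF N M \<tau> s])
  have P': "P \<in> controls \<M> (s + \<tau>)" using P by (simp add: add.commute)
  have e1: "resolvent (\<tau> + s) P x0 = resolvent s (\<lambda>r. P (r + \<tau>)) (resolvent \<tau> P x0)"
    by (rule resolvent_split[OF P bnd \<tau> s])
  have "resolvent \<tau> P = resolvent \<tau> N"
    by (rule resolvent_cong[of "{}"]) (auto simp: P_def)
  moreover have "resolvent s (\<lambda>r. P (r + \<tau>)) = resolvent s M"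
    by (rule resolvent_cong[of "{0}"]) (auto simp: P_def)
  ultimately have e1': "resolvent (\<tau> + s) P x0 = resolvent s M (resolvent \<tau> N x0)" using e1 by simp
  have e2: "resolvent (s + \<tau>) P x0 = resolvent \<tau> (\<lambda>r. P (r + s)) (resolvent s P x0)"
    by (rule resolvent_split[OF P' bnd s \<tau>])
  have z: "resolvent s P x0 \<in> nonneg_orthant"
    by (rule resolvent_nonneg[OF controls_restrict[OF P s] bnd mz s x0]) (use \<tau> in simp)
  have N': "(\<lambda>r. P (r + s)) \<in> controls \<M> \<tau>" by (rule controls_shift[OF P' s \<tau>])
  show ?thesis using e1' e2 z N' by (metis add.commute)
qed

lemma Ebound_ge1:
  assumes "0 \<le> a" shows "1 \<le> Ebound a"
proof -
  have "0 \<le> (\<Sum>k. a^Suc k / fact (Suc k))" by (rule suminf_nonneg[OF summable_expS]) (use assms in simp)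
  then show ?thesis unfolding Ebound_def by linarith
qed

theorem lemma2:
  fixes \<M> :: "(real^'n^'n) set" and \<tau> :: real
  assumes "compact \<M>" and "convex \<M>"
    and "\<forall>A\<in>\<M>. metzler A \<and> irreducible_mat A"
    and "\<tau> > 0"
  shows "(\<forall>s\<ge>0. \<forall>M\<in>controls \<M> s. resolvent s M ` K_tau \<M> \<tau> \<subseteq> K_tau \<M> \<tau>)
       \<and> closed (K_tau \<M> \<tau>)
       \<and> K_tau \<M> \<tau> - {0} \<subseteq> pos_orthant
       \<and> (\<exists>C. \<forall>x\<in>K_tau \<M> \<tau> - {0}. \<forall>y\<in>K_tau \<M> \<tau> - {0}. hilbert_dist x y \<le> C)"
proof -
  note cp = assms(1) and mi = assms(3) and \<tau>0 = assms(4)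
  have mz: "\<forall>A\<in>\<M>. metzler A" using mi by auto
  obtain B where B0: "0 \<le> B" and bnd: "\<And>A i j. A \<in> \<M> \<Longrightarrow> \<bar>A $ i $ j\<bar> \<le> B"
    using bnd_compact[OF cp] by metis
  obtain \<delta> where dl: "0 < \<delta>" and dlS: "\<forall>S\<in>{S. S \<noteq> {} \<and> S \<noteq> UNIV}. \<forall>A\<in>\<M>. \<delta> \<le> (\<Sum>i\<in>-S. \<Sum>j\<in>S. A $ i $ j)"
    using irr_delta[OF cp mi] by blast
  define n where "n = CARD('n)"
  have n0: "0 < n" by (simp add: n_def)
  define h where "h = 1 / (2 * (B + 1))"
  have h: "0 < h" "B * h \<le> 1/2" using B0 by (auto simp: h_def field_simps)
  obtain k where k: "\<tau> / real CARD('n) < real k * h" using ex_less_of_nat_mult[OF h(1)] by blast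
  define \<rho> where "\<rho> = (1/2)^k * min 1 (min (\<delta> * (\<tau> / real CARD('n)) / (2 * real (CARD('n) * CARD('n)))) ((1/2)^k * \<delta> / (2 * (B + 1) * real (CARD('n) * CARD('n)))))"
  have \<rho>0: "0 < \<rho>" unfolding \<rho>_def using dl \<tau>0 B0 by simp
  define E where "E = Ebound (real CARD('n) * real CARD('n) * B * \<tau>)"
  have E1: "1 \<le> E" unfolding E_def using B0 \<tau>0 by (intro Ebound_ge1) simp
  define C0 where "C0 = E * real n / \<rho>^n"
  have C0: "0 < C0" unfolding C0_def using E1 n0 \<rho>0 by simp
  define Q where "Q = {x :: real^'n. (\<forall>i. 0 \<le> x $ i) \<and> (\<forall>i l. x $ l \<le> C0 * x $ i)}"
  define U where "U = (\<Union>M\<in>controls \<M> \<tau>. resolvent \<tau> M ` nonneg_orthant)"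
  have KU: "K_tau \<M> \<tau> = closure (convex hull U)" by (simp add: K_tau_def U_def)
  have UQ: "U \<subseteq> Q"
  proof
    fix y assume "y \<in> U"
    then obtain N x0 where N: "N \<in> controls \<M> \<tau>" and x0: "x0 \<in> nonneg_orthant" and y: "y = resolvent \<tau> N x0"
      unfolding U_def by blast
    have c: "ctrl_ok N \<tau> B" by (rule controls_ok[OF N bnd])
    have m: "metz_on N \<tau>" by (rule controls_metz[OF N mz])
    have irr: "\<And>r S. r \<in> {0..\<tau>} \<Longrightarrow> S \<noteq> {} \<Longrightarrow> S \<noteq> UNIV \<Longrightarrow> \<delta> \<le> (\<Sum>i\<in>-S. \<Sum>j\<in>S. N r $ i $ j)"
      using dlS N by (auto simp: controls_def)
    have nn0: "\<And>i. 0 \<le> x0 $ i" using x0 by (simp add: nonneg_orthant_def)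
    obtain x where x: "is_sol N \<tau> x0 x" "resolvent \<tau> N x0 = x \<tau>"
      and xb: "\<And>t. t \<in> {0..\<tau>} \<Longrightarrow> norm (x t) \<le> E * norm x0"
      using resolvent_sol[OF c] \<tau>0 unfolding E_def by (metis less_imp_le)
    obtain j0 where j0: "\<And>j. x0 $ j \<le> x0 $ j0"
    proof -
      have "finite (range (\<lambda>j. x0 $ j))" by simp
      then have "Max (range (\<lambda>j. x0 $ j)) \<in> range (\<lambda>j. x0 $ j)" by (intro Max_in) auto
      then obtain j0 where j0e: "Max (range (\<lambda>j. x0 $ j)) = x0 $ j0" by (metis imageE)
      have "x0 $ j \<le> x0 $ j0" for j
        using Max_ge[OF \<open>finite (range (\<lambda>j. x0 $ j))\<close>, of "x0 $ j"] j0e by simp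
      then show ?thesis using that by blast
    qed
    have nx0: "norm x0 \<le> real n * x0 $ j0"
    proof -
      have "norm x0 \<le> (\<Sum>j\<in>UNIV. \<bar>x0 $ j\<bar>)" by (rule norm_le_l1_cart)
      also have "\<dots> \<le> (\<Sum>j\<in>(UNIV::'n set). x0 $ j0)" using nn0 j0 by (intro sum_mono) auto
      also have "\<dots> = real n * x0 $ j0" by (simp add: n_def)
      finally show ?thesis .
    qed
    have low: "\<rho>^n * x0 $ j0 \<le> x \<tau> $ i" for i
      unfolding n_def
      by (rule spread[OF c m x(1) _ nn0 B0 dl irr h \<tau>0 order_refl _ \<rho>_def]) (use \<tau>0 k in auto)
    have up: "x \<tau> $ l \<le> E * real n * x0 $ j0" for l
    proof -
      have "x \<tau> $ l \<le> norm (x \<tau>)" using component_le_norm_cart[of "x \<tau>" l] by simp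
      also have "\<dots> \<le> E * norm x0" using xb \<tau>0 by simp
      also have "\<dots> \<le> E * (real n * x0 $ j0)" using E1 nx0 by (intro mult_left_mono) auto
      finally show ?thesis by (simp add: mult.assoc)
    qed
    have "\<forall>i. 0 \<le> x \<tau> $ i"
      using sol_nonneg[OF c m x(1) _ nn0] \<tau>0 by simp
    moreover have "x \<tau> $ l \<le> C0 * x \<tau> $ i" for i l
    proof -
      have "E * real n * x0 $ j0 = C0 * (\<rho>^n * x0 $ j0)" unfolding C0_def using \<rho>0 by simp
      also have "\<dots> \<le> C0 * x \<tau> $ i" using C0 low[of i] by (intro mult_left_mono) auto
      finally show ?thesis using up[of l] by linarith
    qed
    ultimately show "y \<in> Q" unfolding Q_def using y x(2) by auto
  qed
  have Qclosed: "closed Q"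
    unfolding Q_def
    by (intro closed_Collect_conj closed_Collect_all closed_Collect_le continuous_intros)
  have Qconvex: "convex Q"
    unfolding convex_def
  proof (intro ballI allI impI)
    fix x y :: "real^'n" and u v :: real
    assume xy: "x \<in> Q" "y \<in> Q" and uv: "0 \<le> u" "0 \<le> v" "u + v = 1"
    have "0 \<le> (u *\<^sub>R x + v *\<^sub>R y) $ i" for i
      using xy uv unfolding Q_def by simp
    moreover have "(u *\<^sub>R x + v *\<^sub>R y) $ l \<le> C0 * (u *\<^sub>R x + v *\<^sub>R y) $ i" for i l
    proof -
      have "u * x $ l \<le> u * (C0 * x $ i)" using xy uv unfolding Q_def by (intro mult_left_mono) auto
      moreover have "v * y $ l \<le> v * (C0 * y $ i)" using xy uv unfolding Q_def by (intro mult_left_mono) auto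
      ultimately show ?thesis by (simp add: algebra_simps)
    qed
    ultimately show "u *\<^sub>R x + v *\<^sub>R y \<in> Q" unfolding Q_def by auto
  qed
  have KQ: "K_tau \<M> \<tau> \<subseteq> Q"
    unfolding KU by (intro closure_minimal hull_minimal UQ Qconvex Qclosed)
  have pos: "K_tau \<M> \<tau> - {0} \<subseteq> pos_orthant"
  proof
    fix x assume x: "x \<in> K_tau \<M> \<tau> - {0}"
    then have xQ: "x \<in> Q" using KQ by auto
    have "x \<noteq> 0" using x by auto
    then obtain l where xl: "x $ l \<noteq> 0" using vec_eq_iff[of x 0] by auto
    have "0 \<le> x $ l" using xQ unfolding Q_def by blast
    then have l: "0 < x $ l" using xl by (simp add: less_le)
    have "0 < x $ i" for i
    proof -
      have "x $ l \<le> C0 * x $ i" using xQ unfolding Q_def by blast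
      then have "0 < C0 * x $ i" using l by linarith
      then show ?thesis using C0 by (simp add: zero_less_mult_iff)
    qed
    then show "x \<in> pos_orthant" by (simp add: pos_orthant_def)
  qed
  have hil: "\<forall>x\<in>K_tau \<M> \<tau> - {0}. \<forall>y\<in>K_tau \<M> \<tau> - {0}. hilbert_dist x y \<le> ln (C0 * C0)"
  proof (intro ballI)
    fix x y assume x: "x \<in> K_tau \<M> \<tau> - {0}" and y: "y \<in> K_tau \<M> \<tau> - {0}"
    have xp: "\<And>i. 0 < x $ i" and yp: "\<And>i. 0 < y $ i" using pos x y by (auto simp: pos_orthant_def)
    have xQ: "x \<in> Q" and yQ: "y \<in> Q" using KQ x y by auto
    define R where "R = {(x $ i * y $ j) / (x $ j * y $ i) | i j. True}"
    have Req: "R = (\<lambda>p. (x $ fst p * y $ snd p) / (x $ snd p * y $ fst p)) ` UNIV"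
      unfolding R_def
    proof (rule set_eqI, rule iffI)
      fix r assume "r \<in> {(x $ i * y $ j) / (x $ j * y $ i) | i j. True}"
      then obtain i j where "r = (x $ i * y $ j) / (x $ j * y $ i)" by blast
      then show "r \<in> (\<lambda>p. (x $ fst p * y $ snd p) / (x $ snd p * y $ fst p)) ` UNIV"
        by (intro image_eqI[where x="(i,j)"]) auto
    next
      fix r assume "r \<in> (\<lambda>p. (x $ fst p * y $ snd p) / (x $ snd p * y $ fst p)) ` UNIV"
      then obtain p where "r = (x $ fst p * y $ snd p) / (x $ snd p * y $ fst p)" by blast
      then show "r \<in> {(x $ i * y $ j) / (x $ j * y $ i) | i j. True}" by blast
    qed
    have Rfin: "finite R" unfolding Req by simp
    have Rne: "R \<noteq> {}" unfolding Req by simp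
    have Rle: "r \<le> C0 * C0" if "r \<in> R" for r
    proof -
      obtain i j where r: "r = (x $ i * y $ j) / (x $ j * y $ i)" using \<open>r \<in> R\<close> unfolding R_def by auto
      have "x $ i \<le> C0 * x $ j" "y $ j \<le> C0 * y $ i" using xQ yQ unfolding Q_def by auto
      then have "x $ i * y $ j \<le> (C0 * x $ j) * (C0 * y $ i)"
        using xp yp C0 by (intro mult_mono) (auto intro: less_imp_le)
      also have "\<dots> = (C0 * C0) * (x $ j * y $ i)" by (simp add: mult_ac)
      finally show ?thesis unfolding r using xp yp by (simp add: divide_le_eq)
    qed
    have "1 \<in> R" unfolding R_def using xp yp
      by (auto intro!: exI[of _ undefined] simp: field_simps less_imp_neq[symmetric])
    then have Mpos: "0 < Max R" using Max_ge[OF Rfin] by (meson less_le_trans zero_less_one)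
    have "Max R \<le> C0 * C0" using Rle Max_in[OF Rfin Rne] by blast
    then have "ln (Max R) \<le> ln (C0 * C0)" using Mpos by simp
    then show "hilbert_dist x y \<le> ln (C0 * C0)" unfolding hilbert_dist_def R_def .
  qed
  have inv: "\<forall>s\<ge>0. \<forall>M\<in>controls \<M> s. resolvent s M ` K_tau \<M> \<tau> \<subseteq> K_tau \<M> \<tau>"
  proof (intro allI impI ballI)
    fix s :: real and M assume s: "0 \<le> s" and M: "M \<in> controls \<M> s"
    have c: "ctrl_ok M s B" by (rule controls_ok[OF M bnd])
    have lin: "linear (resolvent s M)" by (rule resolvent_linear[OF c s])
    have cont: "continuous_on (closure (convex hull U)) (resolvent s M)"
      using lin by (simp add: linear_conv_bounded_linear linear_continuous_on)
    have fU: "resolvent s M ` U \<subseteq> U"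
    proof
      fix w assume "w \<in> resolvent s M ` U"
      then obtain N x0 where N: "N \<in> controls \<M> \<tau>" and x0: "x0 \<in> nonneg_orthant"
        and w: "w = resolvent s M (resolvent \<tau> N x0)" unfolding U_def by blast
      obtain N' z where "N' \<in> controls \<M> \<tau>" "z \<in> nonneg_orthant" "w = resolvent \<tau> N' z"
        using inv_step[OF M N bnd mz s _ x0] \<tau>0 w by auto
      then show "w \<in> U" unfolding U_def by blast
    qed
    have "resolvent s M ` (convex hull U) = convex hull (resolvent s M ` U)"
      by (rule convex_hull_linear_image[OF lin])
    also have "\<dots> \<subseteq> convex hull U" using fU by (rule hull_mono)
    also have "\<dots> \<subseteq> closure (convex hull U)" by (rule closure_subset)
    finally have "resolvent s M ` (convex hull U) \<subseteq> closure (convex hull U)" .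
    then show "resolvent s M ` K_tau \<M> \<tau> \<subseteq> K_tau \<M> \<tau>"
      unfolding KU by (rule image_closure_subset[OF cont closed_closure])
  qed
  show ?thesis
    using inv pos hil by (auto simp: K_tau_def)
qed


end
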